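(* There exists an online algorithm for $\textsc{Strip-Packing}$ with competitive ratio $O(n^{\log 3-1}\log n)$, where $n$ is the number of pieces and $\log$ denotes the base-$2$ logarithm.
   Context: $\textsc{Strip-Packing}$: pieces are convex polygons arriving one at a time; each must be placed irrevocably, by translation only (no rotation), inside the strip $[0,\infty)\times[0,1]$, interior-disjoint from all previously placed pieces, before the next piece is revealed. The cost is the largest $x$-coordinate of a point of a placed piece. An algorithm $\mathcal A$ has competitive ratio $f(n)$ if $\mathcal A(I)\le f(n)\cdot \mathrm{OPT}(I)$ for every instance $I$ with $n$ pieces, where $\mathrm{OPT}(I)$ is the offline optimal cost. *)

theory Defs
  imports "HOL-Analysis.Analysis" "HOL-Library.Landau_Symbols"
begin

type_synonym point = "real \<times> real"

definition convex_polygon :: "point set \<Rightarrow> bool" where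
  "convex_polygon P \<longleftrightarrow> (\<exists>V. finite V \<and> P = convex hull V) \<and> interior P \<noteq> {}"

definition strip :: "point set" where
  "strip = {p. 0 \<le> fst p \<and> 0 \<le> snd p \<and> snd p \<le> 1}"

definition translate :: "point \<Rightarrow> point set \<Rightarrow> point set" where
  "translate t P = (\<lambda>p. p + t) ` P"

text \<open>An instance is a list of pieces (in arrival order); each must be a convex polygon
  that fits into the strip by some translation.\<close>
definition admissible_instance :: "point set list \<Rightarrow> bool" where
  "admissible_instance I \<longleftrightarrow>
     (\<forall>P\<in>set I. convex_polygon P \<and> (\<exists>t. translate t P \<subseteq> strip))"

definition valid_placement :: "point set list \<Rightarrow> (nat \<Rightarrow> point) \<Rightarrow> bool" where
  "valid_placement I t \<longleftrightarrow>
     (\<forall>i<length I. translate (t i) (I ! i) \<subseteq> strip) \<and>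
     (\<forall>i<length I. \<forall>j<length I. i \<noteq> j \<longrightarrow>
        interior (translate (t i) (I ! i)) \<inter> interior (translate (t j) (I ! j)) = {})"

definition packing_cost :: "point set list \<Rightarrow> (nat \<Rightarrow> point) \<Rightarrow> real" where
  "packing_cost I t = Sup (\<Union>i<length I. fst ` translate (t i) (I ! i))"

definition OPT :: "point set list \<Rightarrow> real" where
  "OPT I = Inf {packing_cost I t | t. valid_placement I t}"

text \<open>A deterministic online algorithm: given the list of pieces revealed so far (the last
  one being the current piece), it returns the translation for the current piece.  Its
  decision thus depends only on the pieces revealed so far and is irrevocable.\<close>
type_synonym online_alg = "point set list \<Rightarrow> point"

definition alg_placement :: "online_alg \<Rightarrow> point set list \<Rightarrow> nat \<Rightarrow> point" where
  "alg_placement A I i = A (take (Suc i) I)"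

definition online_valid :: "online_alg \<Rightarrow> bool" where
  "online_valid A \<longleftrightarrow>
     (\<forall>I. admissible_instance I \<longrightarrow> valid_placement I (alg_placement A I))"

definition has_competitive_ratio :: "online_alg \<Rightarrow> (nat \<Rightarrow> real) \<Rightarrow> bool" where
  "has_competitive_ratio A f \<longleftrightarrow> online_valid A \<and>
     (\<forall>I. admissible_instance I \<and> I \<noteq> [] \<longrightarrow>
        packing_cost I (alg_placement A I) \<le> f (length I) * OPT I)"

end

theory Submission
  imports Defs "HOL-Real_Asymp.Real_Asymp"
begin

lemma cpt_sup:
  fixes f :: "'a::topological_space \<Rightarrow> real"
  assumes "compact S" "S \<noteq> {}" "continuous_on S f"
  shows "\<forall>x\<in>S. f x \<le> Sup (f ` S)" "\<exists>x\<in>S. f x = Sup (f ` S)"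
proof -
  obtain x where x: "x \<in> S" "\<forall>y\<in>S. f y \<le> f x"
    using compact_attains_sup[of "f ` S"] assms compact_continuous_image by fastforce
  have "Sup (f ` S) = f x" using x by (intro cSup_eq_maximum) auto
  then show "\<forall>x\<in>S. f x \<le> Sup (f ` S)" "\<exists>x\<in>S. f x = Sup (f ` S)" using x by auto
qed

lemma cpt_inf:
  fixes f :: "'a::topological_space \<Rightarrow> real"
  assumes "compact S" "S \<noteq> {}" "continuous_on S f"
  shows "\<forall>x\<in>S. Inf (f ` S) \<le> f x" "\<exists>x\<in>S. f x = Inf (f ` S)"
proof -
  obtain x where x: "x \<in> S" "\<forall>y\<in>S. f x \<le> f y"
    using compact_attains_inf[of "f ` S"] assms compact_continuous_image by fastforce
  have "Inf (f ` S) = f x" using x by (intro cInf_eq_minimum) auto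
  then show "\<forall>x\<in>S. Inf (f ` S) \<le> f x" "\<exists>x\<in>S. f x = Inf (f ` S)" using x by auto
qed

lemma convex_polygon_props:
  assumes "convex_polygon P"
  shows "compact P" "convex P" "P \<noteq> {}" "interior P \<noteq> {}"
  using assms unfolding convex_polygon_def
  by (auto simp: finite_imp_compact_convex_hull convex_convex_hull)

definition phi :: "real \<Rightarrow> point \<Rightarrow> real" where "phi s p = fst p - s * snd p"

lemma cont_phi[continuous_intros]: "continuous_on S (phi s)"
  unfolding phi_def by (intro continuous_intros)

definition ymin :: "point set \<Rightarrow> real" where "ymin P = Inf (snd ` P)"
definition ymax :: "point set \<Rightarrow> real" where "ymax P = Sup (snd ` P)"
definition xmin :: "point set \<Rightarrow> real" where "xmin P = Inf (fst ` P)"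
definition xmax :: "point set \<Rightarrow> real" where "xmax P = Sup (fst ` P)"
definition pmin :: "real \<Rightarrow> point set \<Rightarrow> real" where "pmin s P = Inf (phi s ` P)"
definition pmax :: "real \<Rightarrow> point set \<Rightarrow> real" where "pmax s P = Sup (phi s ` P)"
definition hgt :: "point set \<Rightarrow> real" where "hgt P = ymax P - ymin P"
definition wid :: "point set \<Rightarrow> real" where "wid P = xmax P - xmin P"
definition ext :: "real \<Rightarrow> point set \<Rightarrow> real" where "ext s P = pmax s P - pmin s P"

locale cpt = fixes P :: "point set" assumes cp: "compact P" and ne: "P \<noteq> {}"
begin

lemma cfs: "continuous_on P fst" "continuous_on P snd" "continuous_on P (phi s)"
  using continuous_on_fst[OF continuous_on_id] continuous_on_snd[OF continuous_on_id] cont_phi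
  by auto

lemma bnds:
  "\<And>p. p \<in> P \<Longrightarrow> ymin P \<le> snd p" "\<And>p. p \<in> P \<Longrightarrow> snd p \<le> ymax P"
  "\<And>p. p \<in> P \<Longrightarrow> xmin P \<le> fst p" "\<And>p. p \<in> P \<Longrightarrow> fst p \<le> xmax P"
  "\<And>p. p \<in> P \<Longrightarrow> pmin s P \<le> phi s p" "\<And>p. p \<in> P \<Longrightarrow> phi s p \<le> pmax s P"
  using cpt_sup(1)[OF cp ne, of fst] cpt_sup(1)[OF cp ne, of snd] cpt_sup(1)[OF cp ne, of "phi s"]
    cpt_inf(1)[OF cp ne, of fst] cpt_inf(1)[OF cp ne, of snd] cpt_inf(1)[OF cp ne, of "phi s"]
  unfolding ymin_def ymax_def xmin_def xmax_def pmin_def pmax_def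
  using cfs by auto

lemma att:
  "\<exists>p\<in>P. snd p = ymin P" "\<exists>p\<in>P. snd p = ymax P"
  "\<exists>p\<in>P. fst p = xmin P" "\<exists>p\<in>P. fst p = xmax P"
  "\<exists>p\<in>P. phi s p = pmin s P" "\<exists>p\<in>P. phi s p = pmax s P"
  using cpt_sup(2)[OF cp ne, of fst] cpt_sup(2)[OF cp ne, of snd] cpt_sup(2)[OF cp ne, of "phi s"]
    cpt_inf(2)[OF cp ne, of fst] cpt_inf(2)[OF cp ne, of snd] cpt_inf(2)[OF cp ne, of "phi s"]
  unfolding ymin_def ymax_def xmin_def xmax_def pmin_def pmax_def
  using cfs by auto

lemma ext_nonneg: "0 \<le> ext s P"
  using att(5)[of s] bnds(6)[of _ s] unfolding ext_def by force

lemma ext_lip: "ext s P \<le> ext t P + \<bar>s - t\<bar> * hgt P"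
proof -
  obtain p where p: "p \<in> P" "phi s p = pmax s P" using att(6) by blast
  obtain q where q: "q \<in> P" "phi s q = pmin s P" using att(5) by blast
  have "phi t p - phi t q \<le> ext t P" using bnds(5,6)[OF p(1), of t] bnds(5,6)[OF q(1), of t]
    unfolding ext_def by auto
  moreover have "(s - t) * (snd q - snd p) \<le> \<bar>s - t\<bar> * hgt P"
  proof -
    have "\<bar>snd q - snd p\<bar> \<le> hgt P" using bnds(1)[OF p(1)] bnds(2)[OF p(1)] bnds(1)[OF q(1)] bnds(2)[OF q(1)] unfolding hgt_def by (simp add: abs_le_iff)
    hence "\<bar>(s - t) * (snd q - snd p)\<bar> \<le> \<bar>s - t\<bar> * hgt P"
      by (simp add: abs_mult mult_left_mono)
    thus ?thesis by linarith
  qed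
  moreover have "ext s P = phi t p - phi t q + (s - t) * (snd q - snd p)"
    unfolding ext_def p(2)[symmetric] q(2)[symmetric] phi_def by (simp add: algebra_simps)
  ultimately show ?thesis by linarith
qed

lemma ext0: "ext 0 P = wid P"
  unfolding ext_def wid_def pmax_def pmin_def xmax_def xmin_def phi_def by simp

lemma ext_le: "ext s P \<le> wid P + \<bar>s\<bar> * hgt P"
  using ext_lip[of s 0] ext0 by simp

lemma hgt_nonneg: "0 \<le> hgt P" using att(1) bnds(2) unfolding hgt_def by force
lemma wid_nonneg: "0 \<le> wid P" using att(3) bnds(4) unfolding wid_def by force

end

lemma cpt_translate: "cpt P \<Longrightarrow> cpt (translate t P)"
  unfolding cpt_def translate_def
  by (auto intro!: compact_continuous_image continuous_intros)

lemma Sup_shift: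
  fixes f :: "point \<Rightarrow> real"
  assumes "cpt P" "\<And>p. f (p + t) = f p + c" "continuous_on UNIV f"
  shows "Sup (f ` translate t P) = Sup (f ` P) + c" "Inf (f ` translate t P) = Inf (f ` P) + c"
proof -
  have c1: "compact P" "P \<noteq> {}" using assms(1) unfolding cpt_def by auto
  have c2: "compact (translate t P)" "translate t P \<noteq> {}" using cpt_translate[OF assms(1)] unfolding cpt_def by auto
  have cf: "continuous_on S f" for S using continuous_on_subset[OF assms(3)] by auto
  note a1 = cpt_sup[OF c1 cf] and a2 = cpt_sup[OF c2 cf] and b1 = cpt_inf[OF c1 cf] and b2 = cpt_inf[OF c2 cf]
  obtain p where p: "p \<in> P" "f p = Sup (f ` P)" using a1 by blast
  obtain q where q: "q \<in> translate t P" "f q = Sup (f ` translate t P)" using a2 by blast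
  have "p + t \<in> translate t P" using p unfolding translate_def by auto
  moreover obtain q0 where "q0 \<in> P" "q = q0 + t" using q unfolding translate_def by auto
  ultimately show "Sup (f ` translate t P) = Sup (f ` P) + c"
    using a1(1) a2(1) p q assms(2) by (metis add_le_cancel_right antisym)
  obtain p where p: "p \<in> P" "f p = Inf (f ` P)" using b1 by blast
  obtain q where q: "q \<in> translate t P" "f q = Inf (f ` translate t P)" using b2 by blast
  have "p + t \<in> translate t P" using p unfolding translate_def by auto
  moreover obtain q0 where "q0 \<in> P" "q = q0 + t" using q unfolding translate_def by auto
  ultimately show "Inf (f ` translate t P) = Inf (f ` P) + c"
    using b1(1) b2(1) p q assms(2) by (metis add_le_cancel_right antisym)
qed

lemma int_ball: assumes "q \<in> interior S" obtains e where "e > 0" "ball q e \<subseteq> S"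
  using assms by (meson mem_interior)

lemma int_phi_lo: assumes "S \<subseteq> {q. a \<le> phi s q}" "q \<in> interior S" shows "a < phi s q"
proof -
  obtain e where e: "e > 0" "ball q e \<subseteq> S" using int_ball[OF assms(2)] by blast
  have "q - (e/2, 0) \<in> ball q e" using e by (simp add: dist_norm)
  hence "a \<le> phi s (q - (e/2,0))" using e assms(1) by blast
  thus ?thesis using e by (simp add: phi_def)
qed

lemma int_phi_hi: assumes "S \<subseteq> {q. phi s q \<le> b}" "q \<in> interior S" shows "phi s q < b"
proof -
  obtain e where e: "e > 0" "ball q e \<subseteq> S" using int_ball[OF assms(2)] by blast
  have "q + (e/2, 0) \<in> ball q e" using e by (simp add: dist_norm)
  hence "phi s (q + (e/2,0)) \<le> b" using e assms(1) by blast
  thus ?thesis using e by (simp add: phi_def)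
qed

lemma int_snd_lo: fixes q :: point assumes "S \<subseteq> {q. a \<le> snd q}" "q \<in> interior S" shows "a < snd q"
proof -
  obtain e where e: "e > 0" "ball q e \<subseteq> S" using int_ball[OF assms(2)] by blast
  have "q - (0, e/2) \<in> ball q e" using e by (simp add: dist_norm)
  hence "a \<le> snd (q - (0, e/2))" using e assms(1) by blast
  thus ?thesis using e by simp
qed

lemma int_snd_hi: fixes q :: point assumes "S \<subseteq> {q. snd q \<le> b}" "q \<in> interior S" shows "snd q < b"
proof -
  obtain e where e: "e > 0" "ball q e \<subseteq> S" using int_ball[OF assms(2)] by blast
  have "q + (0, e/2) \<in> ball q e" using e by (simp add: dist_norm)
  hence "snd (q + (0, e/2)) \<le> b" using e assms(1) by blast
  thus ?thesis using e by simp
qed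

lemma not_collinear_phi:
  fixes B T R :: point
  assumes "phi s B = phi s T" "phi s R \<noteq> phi s B" "B \<noteq> T"
  shows "\<not> collinear {B, T, R}"
proof
  assume "collinear {B, T, R}"
  then obtain u where u: "\<forall>x\<in>{B, T, R}. \<forall>y\<in>{B, T, R}. \<exists>c. x - y = c *\<^sub>R u"
    unfolding collinear_def by blast
  obtain c1 where c1: "R - B = c1 *\<^sub>R u" using u by blast
  obtain c2 where c2: "T - B = c2 *\<^sub>R u" using u by blast
  have c2nz: "c2 \<noteq> 0" using c2 assms(3) by auto
  have lin: "phi s (x - y) = phi s x - phi s y" for x y unfolding phi_def by (simp add: algebra_simps)
  have sc: "phi s (c *\<^sub>R x) = c * phi s x" for c x unfolding phi_def by (simp add: algebra_simps)
  have "phi s T - phi s B = c2 * phi s u" using c2 lin sc by metis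
  hence "phi s u = 0" using assms(1) c2nz by simp
  moreover have "phi s R - phi s B = c1 * phi s u" using c1 lin sc by metis
  ultimately show False using assms(2) by simp
qed

lemma tri_chord:
  fixes Q :: "point set" and B T R :: point and l s th :: real
  assumes cv: "convex Q" and inQ: "B \<in> Q" "T \<in> Q" "R \<in> Q"
    and yR: "snd B \<le> snd R" "snd R \<le> snd T"
    and ph: "phi s B = phi s T" "phi s R \<noteq> phi s B"
    and l1: "4 * (l - snd B) \<ge> snd T - snd B" and l2: "4 * (snd T - l) \<ge> snd T - snd B"
    and hpos: "snd B < snd T"
    and th: "0 < th" "th < 1"
  shows "(fst B + (l - snd B) / (snd T - snd B) * (fst T - fst B) + th * (phi s R - phi s B) / 4, l) \<in> interior Q"
proof -
  define h where "h = snd T - snd B"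
  have hp: "h > 0" using hpos h_def by simp
  have lB: "snd B < l" "l < snd T" using l1 l2 hpos by auto
  define mu where "mu = (l - snd B) / h"
  have mu: "0 < mu" "mu < 1" using l1 l2 hp unfolding mu_def h_def by (auto simp: field_simps)
  define m where "m = (1 - mu) *\<^sub>R B + mu *\<^sub>R T"
  have mh: "mu * h = l - snd B" unfolding mu_def using hp by simp
  have "snd m = snd B + mu * h" unfolding m_def h_def by (simp add: algebra_simps)
  hence m1: "snd m = l" using mh by simp
  have "fst m = fst B + mu * (fst T - fst B)" unfolding m_def by (simp add: algebra_simps)
  hence m2: "fst m = fst B + (l - snd B) / (snd T - snd B) * (fst T - fst B)"
    unfolding mu_def h_def by simp
  have "phi s m = phi s B + mu * (phi s T - phi s B)" unfolding m_def phi_def by (simp add: algebra_simps)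
  hence phm: "phi s m = phi s B" using ph(1) by simp
  have BT: "B \<noteq> T" using hpos by auto
  have nc: "\<not> collinear {B, T, R}" using not_collinear_phi[OF ph BT] .
  have eq: "interior (convex hull {B, T, R}) =
         {v. \<exists>x y z. 0 < x \<and> 0 < y \<and> 0 < z \<and> x + y + z = 1 \<and> x *\<^sub>R B + y *\<^sub>R T + z *\<^sub>R R = v}"
    by (rule interior_convex_hull_3_minimal[OF nc]) simp
  have sub: "interior (convex hull {B, T, R}) \<subseteq> interior Q"
    using inQ cv by (intro interior_mono) (simp add: hull_minimal)
  obtain r lam where r: "snd r = l" "phi s r - phi s B = lam * (phi s R - phi s B)" "1/4 \<le> lam" "lam \<le> 1"
    and rcomb: "\<forall>th'. 0 < th' \<and> th' < 1 \<longrightarrow> (1 - th') *\<^sub>R m + th' *\<^sub>R r \<in> interior (convex hull {B, T, R})"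
  proof (cases "l \<le> snd R")
    case True
    define lam where "lam = (l - snd B) / (snd R - snd B)"
    have pos: "snd R - snd B > 0" using True lB by simp
    have lam: "0 < lam" "lam \<le> 1" "1/4 \<le> lam"
    proof -
      show "0 < lam" "lam \<le> 1" unfolding lam_def using pos True lB by (auto simp: field_simps)
      have "snd R - snd B \<le> h" using yR unfolding h_def by simp
      thus "1/4 \<le> lam" unfolding lam_def using pos l1 unfolding h_def by (simp add: field_simps)
    qed
    define r where "r = (1 - lam) *\<^sub>R B + lam *\<^sub>R R"
    have lh: "lam * (snd R - snd B) = l - snd B" unfolding lam_def using pos by simp
    have "snd r = snd B + lam * (snd R - snd B)" unfolding r_def by (simp add: algebra_simps)
    hence r1: "snd r = l" using lh by simp
    have r2: "phi s r - phi s B = lam * (phi s R - phi s B)" unfolding r_def phi_def by (simp add: algebra_simps)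
    have "(1 - th') *\<^sub>R m + th' *\<^sub>R r \<in> interior (convex hull {B, T, R})" if "0 < th'" "th' < 1" for th'
    proof -
      have "(1 - th') *\<^sub>R m + th' *\<^sub>R r = ((1 - th') * (1 - mu) + th' * (1 - lam)) *\<^sub>R B + ((1 - th') * mu) *\<^sub>R T + (th' * lam) *\<^sub>R R"
        unfolding m_def r_def by (simp add: algebra_simps)
      moreover have "0 < (1 - th') * (1 - mu) + th' * (1 - lam)" using that mu lam
        by (intro add_pos_nonneg mult_pos_pos mult_nonneg_nonneg) auto
      moreover have "0 < (1 - th') * mu" "0 < th' * lam" using that mu lam by auto
      moreover have "((1 - th') * (1 - mu) + th' * (1 - lam)) + ((1 - th') * mu) + (th' * lam) = 1"
        by (simp add: algebra_simps)
      ultimately show ?thesis unfolding eq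
        apply -
        apply (rule CollectI, rule exI[of _ "(1 - th') * (1 - mu) + th' * (1 - lam)"], rule exI[of _ "(1 - th') * mu"], rule exI[of _ "th' * lam"])
        by simp
    qed
    then have rc: "\<forall>th'. 0 < th' \<and> th' < 1 \<longrightarrow> (1 - th') *\<^sub>R m + th' *\<^sub>R r \<in> interior (convex hull {B, T, R})" by blast
    show ?thesis by (rule that[of r lam]) (use r1 r2 lam rc in blast)+
  next
    case False
    define lam where "lam = (snd T - l) / (snd T - snd R)"
    have pos: "snd T - snd R > 0" using False lB by simp
    have lam: "0 < lam" "lam \<le> 1" "1/4 \<le> lam"
    proof -
      show "0 < lam" "lam \<le> 1" unfolding lam_def using pos False lB by (auto simp: field_simps)
      have "snd T - snd R \<le> h" using yR unfolding h_def by simp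
      thus "1/4 \<le> lam" unfolding lam_def using pos l2 unfolding h_def by (simp add: field_simps)
    qed
    define r where "r = (1 - lam) *\<^sub>R T + lam *\<^sub>R R"
    have lh: "lam * (snd T - snd R) = snd T - l" unfolding lam_def using pos by simp
    have "snd r = snd T - lam * (snd T - snd R)" unfolding r_def by (simp add: algebra_simps)
    hence r1: "snd r = l" using lh by simp
    have "phi s r - phi s T = lam * (phi s R - phi s T)" unfolding r_def phi_def by (simp add: algebra_simps)
    hence r2: "phi s r - phi s B = lam * (phi s R - phi s B)" using ph(1) by simp
    have "(1 - th') *\<^sub>R m + th' *\<^sub>R r \<in> interior (convex hull {B, T, R})" if "0 < th'" "th' < 1" for th'
    proof -
      have "(1 - th') *\<^sub>R m + th' *\<^sub>R r = ((1 - th') * (1 - mu)) *\<^sub>R B + ((1 - th') * mu + th' * (1 - lam)) *\<^sub>R T + (th' * lam) *\<^sub>R R"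
        unfolding m_def r_def by (simp add: algebra_simps)
      moreover have "0 < (1 - th') * mu + th' * (1 - lam)" using that mu lam
        by (intro add_pos_nonneg mult_pos_pos mult_nonneg_nonneg) auto
      moreover have "0 < (1 - th') * (1 - mu)" "0 < th' * lam" using that mu lam by auto
      moreover have "((1 - th') * (1 - mu)) + ((1 - th') * mu + th' * (1 - lam)) + (th' * lam) = 1"
        by (simp add: algebra_simps)
      ultimately show ?thesis unfolding eq
        apply -
        apply (rule CollectI, rule exI[of _ "(1 - th') * (1 - mu)"], rule exI[of _ "(1 - th') * mu + th' * (1 - lam)"], rule exI[of _ "th' * lam"])
        by simp
    qed
    then have rc: "\<forall>th'. 0 < th' \<and> th' < 1 \<longrightarrow> (1 - th') *\<^sub>R m + th' *\<^sub>R r \<in> interior (convex hull {B, T, R})" by blast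
    show ?thesis by (rule that[of r lam]) (use r1 r2 lam rc in blast)+
  qed
  define th' where "th' = th / (4 * lam)"
  have th': "0 < th'" "th' < 1" unfolding th'_def using th r by (auto simp: field_simps)
  have "(1 - th') *\<^sub>R m + th' *\<^sub>R r = (fst B + (l - snd B) / (snd T - snd B) * (fst T - fst B) + th * (phi s R - phi s B) / 4, l)"
  proof -
    have "fst r - fst m = lam * (phi s R - phi s B)"
      using r(1,2) m1 phm unfolding phi_def by (simp add: algebra_simps)
    hence "th' * (fst r - fst m) = (th / (4 * lam)) * (lam * (phi s R - phi s B))"
      unfolding th'_def by simp
    also have "... = th * (phi s R - phi s B) / 4" using r(3) by (simp add: field_simps)
    finally have "fst m + th' * (fst r - fst m) = fst m + th * (phi s R - phi s B) / 4" by simp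
    thus ?thesis using m1 m2 r(1) by (simp add: prod_eq_iff algebra_simps)
  qed
  thus ?thesis using rcomb th' sub by (metis subsetD)
qed

lemma not_collinear_tri:
  fixes xL xR l :: real and T :: point
  assumes "xL < xR" "l < snd T"
  shows "\<not> collinear {(xL, l), (xR, l), T}"
proof
  assume "collinear {(xL, l), (xR, l), T}"
  then obtain u where u: "\<forall>x\<in>{(xL, l), (xR, l), T}. \<forall>y\<in>{(xL, l), (xR, l), T}. \<exists>c. x - y = c *\<^sub>R u"
    unfolding collinear_def by blast
  obtain c1 where c1: "(xR, l) - (xL, l) = c1 *\<^sub>R u" using u by blast
  obtain c2 where c2: "T - (xL, l) = c2 *\<^sub>R u" using u by blast
  have "xR - xL = c1 * fst u" "0 = c1 * snd u" using c1 by (auto simp: prod_eq_iff)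
  hence "snd u = 0" using assms by auto
  moreover have "snd T - l = c2 * snd u" using c2 by (auto simp: prod_eq_iff)
  ultimately show False using assms by simp
qed

lemma meas_Ioo: "l \<le> u \<Longrightarrow> measure lborel {l<..<(u::real)} = u - l"
  by (simp add: measure_def emeasure_lborel_Ioo)

lemma J_open: "open {x::real. (x, l) \<in> interior (Q :: point set)}"
proof -
  have "{x::real. (x, l) \<in> interior Q} = (\<lambda>x. (x, l)) -` interior Q" by auto
  moreover have "open ((\<lambda>x::real. (x, l)) -` interior Q)"
    by (rule continuous_open_vimage) (auto intro!: continuous_intros)
  ultimately show ?thesis by simp
qed

lemma sum_meas_le:
  fixes J :: "'i \<Rightarrow> real set"
  assumes "finite S" "\<And>i. i \<in> S \<Longrightarrow> J i \<in> sets lborel" "disjoint_family_on J S"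
    "\<And>i. i \<in> S \<Longrightarrow> J i \<subseteq> {0..C}" "0 \<le> C"
  shows "(\<Sum>i\<in>S. measure lborel (J i)) \<le> C"
proof -
  have fin: "emeasure lborel (J i) \<noteq> \<infinity>" if "i \<in> S" for i
  proof -
    have "emeasure lborel (J i) \<le> emeasure lborel {0..C}"
      using assms(2,4) that by (intro emeasure_mono) auto
    thus ?thesis using assms(5) by (auto simp: top_unique)
  qed
  have "(\<Sum>i\<in>S. measure lborel (J i)) = measure lborel (\<Union>i\<in>S. J i)"
    using assms fin by (intro measure_finite_Union[symmetric]) auto
  also have "... \<le> measure lborel {0..C}"
    using assms by (intro measure_mono_fmeasurable fmeasurable_compact) auto
  also have "... = C" using assms(5) by simp
  finally show ?thesis .
qed

lemma chord_measure:
  fixes Q :: "point set" and B T :: point and l :: real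
  assumes cp: "compact Q" and cv: "convex Q" and ne: "Q \<noteq> {}"
    and BT: "B \<in> Q" "T \<in> Q" "snd B = ymin Q" "snd T = ymax Q" "ymin Q < ymax Q"
    and l1: "4 * (l - ymin Q) \<ge> hgt Q" and l2: "4 * (ymax Q - l) \<ge> hgt Q"
  shows "ext ((fst T - fst B) / hgt Q) Q / 4 \<le> measure lborel {x. (x, l) \<in> interior Q}"
proof -
  interpret cpt Q using cp ne by unfold_locales
  define s where "s = (fst T - fst B) / hgt Q"
  define J where "J = {x. (x, l) \<in> interior Q}"
  have hp: "hgt Q > 0" using BT unfolding hgt_def by simp
  have phBT: "phi s B = phi s T"
  proof -
    have "s * (snd T - snd B) = fst T - fst B" unfolding s_def using BT hp unfolding hgt_def by simp
    thus ?thesis unfolding phi_def by (simp add: algebra_simps)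
  qed
  obtain R where R: "R \<in> Q" "phi s R = pmax s Q" using att(6) by blast
  obtain Lp where Lp: "Lp \<in> Q" "phi s Lp = pmin s Q" using att(5) by blast
  define xm where "xm = fst B + (l - snd B) / (snd T - snd B) * (fst T - fst B)"
  have a: "phi s R - phi s B \<ge> 0" using R bnds(6)[OF BT(1)] by simp
  have b: "phi s B - phi s Lp \<ge> 0" using Lp bnds(5)[OF BT(1)] by simp
  have hyp: "4 * (l - snd B) \<ge> snd T - snd B" "4 * (snd T - l) \<ge> snd T - snd B" "snd B < snd T"
    using l1 l2 BT unfolding hgt_def by auto
  have I1: "{xm <..< xm + (phi s R - phi s B) / 4} \<subseteq> J"
  proof (cases "phi s R = phi s B")
    case True thus ?thesis by simp
  next
    case False
    show ?thesis
    proof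
      fix x assume x: "x \<in> {xm <..< xm + (phi s R - phi s B) / 4}"
      define th where "th = (x - xm) * 4 / (phi s R - phi s B)"
      have pos: "phi s R - phi s B > 0" using a False by simp
      have th: "0 < th" "th < 1" using x pos unfolding th_def by (auto simp: field_simps)
      have "x = xm + th * (phi s R - phi s B) / 4" unfolding th_def using pos by (simp add: field_simps)
      moreover have "snd B \<le> snd R" "snd R \<le> snd T" using bnds(1,2)[OF R(1)] BT by auto
      ultimately show "x \<in> J" unfolding J_def xm_def
        using tri_chord[OF cv BT(1,2) R(1) _ _ phBT False hyp th] by simp
    qed
  qed
  have I2: "{xm - (phi s B - phi s Lp) / 4 <..< xm} \<subseteq> J"
  proof (cases "phi s Lp = phi s B")
    case True thus ?thesis by simp
  next
    case False
    show ?thesis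
    proof
      fix x assume x: "x \<in> {xm - (phi s B - phi s Lp) / 4 <..< xm}"
      define th where "th = (x - xm) * 4 / (phi s Lp - phi s B)"
      have pos: "phi s B - phi s Lp > 0" using b False by simp
      have th: "0 < th" "th < 1" using x pos unfolding th_def by (auto simp: field_simps)
      have "x = xm + th * (phi s Lp - phi s B) / 4" unfolding th_def using pos by (simp add: field_simps)
      moreover have "snd B \<le> snd Lp" "snd Lp \<le> snd T" using bnds(1,2)[OF Lp(1)] BT by auto
      ultimately show "x \<in> J" unfolding J_def xm_def
        using tri_chord[OF cv BT(1,2) Lp(1) _ _ phBT False hyp th] by simp
    qed
  qed
  have Jb: "J \<subseteq> {xmin Q..xmax Q}" unfolding J_def using interior_subset bnds(3,4) by fastforce
  have Jf: "J \<in> fmeasurable lborel"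
    by (rule fmeasurableI2[OF fmeasurable_compact[OF compact_Icc] Jb]) (use J_open in \<open>simp add: J_def\<close>)
  have "measure lborel ({xm - (phi s B - phi s Lp) / 4 <..< xm} \<union> {xm <..< xm + (phi s R - phi s B) / 4})
      = measure lborel {xm - (phi s B - phi s Lp) / 4 <..< xm} + measure lborel {xm <..< xm + (phi s R - phi s B) / 4}"
  proof (rule measure_Union)
    have "xm - (phi s B - phi s Lp) / 4 \<le> xm" "xm \<le> xm + (phi s R - phi s B) / 4" using a b by auto
    thus "emeasure lborel {xm - (phi s B - phi s Lp) / 4<..<xm} \<noteq> \<infinity>"
      "emeasure lborel {xm<..<xm + (phi s R - phi s B) / 4} \<noteq> \<infinity>"
      by (simp_all add: emeasure_lborel_Ioo)
  qed auto
  also have "... = ext s Q / 4" using a b unfolding ext_def R(2)[symmetric] Lp(2)[symmetric] by (simp add: meas_Ioo field_simps)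
  finally have "ext s Q / 4 = measure lborel ({xm - (phi s B - phi s Lp) / 4 <..< xm} \<union> {xm <..< xm + (phi s R - phi s B) / 4})" by simp
  also have "... \<le> measure lborel J"
    using I1 I2 Jf by (intro measure_mono_fmeasurable) auto
  finally show ?thesis unfolding s_def J_def .
qed

definition botp :: "point set \<Rightarrow> point" where "botp P = (SOME p. p \<in> P \<and> snd p = ymin P)"
definition topp :: "point set \<Rightarrow> point" where "topp P = (SOME p. p \<in> P \<and> snd p = ymax P)"
definition slope :: "point set \<Rightarrow> real" where "slope P = (fst (topp P) - fst (botp P)) / hgt P"

context cpt begin
lemma botp: "botp P \<in> P" "snd (botp P) = ymin P"
proof -
  have "\<exists>p. p \<in> P \<and> snd p = ymin P" using att(1) by blast
  from someI_ex[OF this] show "botp P \<in> P" "snd (botp P) = ymin P" unfolding botp_def by auto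
qed
lemma topp: "topp P \<in> P" "snd (topp P) = ymax P"
proof -
  have "\<exists>p. p \<in> P \<and> snd p = ymax P" using att(2) by blast
  from someI_ex[OF this] show "topp P \<in> P" "snd (topp P) = ymax P" unfolding topp_def by auto
qed
end

lemma tr_mem: "p \<in> P \<Longrightarrow> p + t \<in> translate t P" unfolding translate_def by auto

lemma tr_shift:
  assumes "cpt P"
  shows "ymin (translate t P) = ymin P + snd t" "ymax (translate t P) = ymax P + snd t"
    "xmin (translate t P) = xmin P + fst t" "xmax (translate t P) = xmax P + fst t"
    "pmin s (translate t P) = pmin s P + (fst t - s * snd t)"
    "pmax s (translate t P) = pmax s P + (fst t - s * snd t)"
    "hgt (translate t P) = hgt P" "wid (translate t P) = wid P" "ext s (translate t P) = ext s P"
proof -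
  have c1: "continuous_on UNIV (fst :: point \<Rightarrow> real)" "continuous_on UNIV (snd :: point \<Rightarrow> real)"
    using continuous_on_fst[OF continuous_on_id] continuous_on_snd[OF continuous_on_id] by auto
  have hh: "phi s (p + t) = phi s p + (fst t - s * snd t)" for p unfolding phi_def by (simp add: algebra_simps)
  note f = Sup_shift[OF assms, of fst t "fst t", OF _ c1(1)]
  note g = Sup_shift[OF assms, of snd t "snd t", OF _ c1(2)]
  note h = Sup_shift[OF assms, of "phi s" t "fst t - s * snd t", OF hh cont_phi]
  have f': "Sup (fst ` translate t P) = Sup (fst ` P) + fst t" "Inf (fst ` translate t P) = Inf (fst ` P) + fst t"
    by (rule f; simp)+
  have g': "Sup (snd ` translate t P) = Sup (snd ` P) + snd t" "Inf (snd ` translate t P) = Inf (snd ` P) + snd t"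
    by (rule g; simp)+
  show "ymin (translate t P) = ymin P + snd t" "ymax (translate t P) = ymax P + snd t"
    "xmin (translate t P) = xmin P + fst t" "xmax (translate t P) = xmax P + fst t"
    "pmin s (translate t P) = pmin s P + (fst t - s * snd t)"
    "pmax s (translate t P) = pmax s P + (fst t - s * snd t)"
    unfolding ymin_def ymax_def xmin_def xmax_def pmin_def pmax_def using f' g' h by simp_all
  thus "hgt (translate t P) = hgt P" "wid (translate t P) = wid P" "ext s (translate t P) = ext s P"
    unfolding hgt_def wid_def ext_def by auto
qed

lemma adm_piece:
  assumes "admissible_instance I" "i < length I"
  shows "cpt (I ! i)" "convex (I ! i)" "interior (I ! i) \<noteq> {}"
  using assms convex_polygon_props[of "I ! i"] unfolding admissible_instance_def cpt_def by auto

lemma cost_ge: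
  assumes "admissible_instance I" "i < length I" "q \<in> translate (t i) (I ! i)"
  shows "fst q \<le> packing_cost I t"
proof -
  have "compact (\<Union>i<length I. fst ` translate (t i) (I ! i))"
  proof (intro compact_UN compact_continuous_image)
    fix j assume "j \<in> {..<length I}"
    thus "compact (translate (t j) (I ! j))" using adm_piece(1)[OF assms(1)] cpt_translate unfolding cpt_def by blast
  qed (auto intro!: continuous_intros)
  hence "bdd_above (\<Union>i<length I. fst ` translate (t i) (I ! i))"
    by (intro bounded_imp_bdd_above compact_imp_bounded)
  thus ?thesis unfolding packing_cost_def using assms by (intro cSup_upper) auto
qed

lemma cost_le:
  assumes "I \<noteq> []" "admissible_instance I" "\<And>i q. i < length I \<Longrightarrow> q \<in> translate (t i) (I ! i) \<Longrightarrow> fst q \<le> X"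
  shows "packing_cost I t \<le> X"
proof -
  have "(I ! 0) \<noteq> {}" using adm_piece(1)[OF assms(2), of 0] assms(1) unfolding cpt_def by auto
  hence "translate (t 0) (I ! 0) \<noteq> {}" unfolding translate_def by auto
  hence "(\<Union>i<length I. fst ` translate (t i) (I ! i)) \<noteq> {}" using assms(1) by auto
  thus ?thesis unfolding packing_cost_def using assms(3) by (intro cSup_least) auto
qed

lemma valid_bounds:
  assumes "valid_placement I t" "admissible_instance I" "i < length I" "q \<in> translate (t i) (I ! i)"
  shows "0 \<le> fst q" "fst q \<le> packing_cost I t" "0 \<le> snd q" "snd q \<le> 1"
  using assms cost_ge unfolding valid_placement_def strip_def by auto

lemma cost_nonneg:
  assumes "valid_placement I t" "admissible_instance I" "I \<noteq> []"
  shows "0 \<le> packing_cost I t"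
proof -
  obtain p where "p \<in> I ! 0" using adm_piece(1)[OF assms(2), of 0] assms(3) unfolding cpt_def by auto
  hence pt: "p + t 0 \<in> translate (t 0) (I ! 0)" by (rule tr_mem)
  have "0 \<le> fst (p + t 0)" "fst (p + t 0) \<le> packing_cost I t"
    using valid_bounds(1,2)[OF assms(1,2) _ pt] assms(3) by auto
  thus ?thesis by linarith
qed

lemma wid_le_cost:
  assumes "valid_placement I t" "admissible_instance I" "i < length I"
  shows "wid (I ! i) \<le> packing_cost I t"
proof -
  interpret c: cpt "translate (t i) (I ! i)" using cpt_translate adm_piece(1) assms(2,3) by blast
  obtain p where p: "p \<in> translate (t i) (I ! i)" "fst p = xmin (translate (t i) (I ! i))" using c.att(3) by blast
  obtain q where q: "q \<in> translate (t i) (I ! i)" "fst q = xmax (translate (t i) (I ! i))" using c.att(4) by blast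
  have "0 \<le> fst p" "fst q \<le> packing_cost I t" using valid_bounds(1)[OF assms p(1)] valid_bounds(2)[OF assms q(1)] by auto
  moreover have "wid (I ! i) = fst q - fst p"
    using tr_shift(8)[OF adm_piece(1)[OF assms(2,3)], of "t i"] p q unfolding wid_def by simp
  ultimately show ?thesis by linarith
qed

lemma class_lb:
  assumes vp: "valid_placement I t" and adm: "admissible_instance I" and ne: "I \<noteq> []"
  shows "(\<Sum>i\<in>{i. i < length I \<and> hgt (I ! i) > 1 / 2 ^ (k + 1)}. ext (slope (I ! i)) (I ! i))
          \<le> 4 * (4 * 2 ^ k + 1) * packing_cost I t"
proof -
  define C where "C = packing_cost I t"
  define N :: nat where "N = 4 * 2 ^ k"
  define S where "S = {i. i < length I \<and> hgt (I ! i) > 1 / 2 ^ (k + 1)}"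
  define Q where "Q i = translate (t i) (I ! i)" for i
  define m where "m i = nat \<lceil>(ymin (Q i) + hgt (I ! i) / 4) * N\<rceil>" for i
  define J where "J i l = {x. (x, l) \<in> interior (Q i)}" for i l
  have C0: "0 \<le> C" unfolding C_def using cost_nonneg[OF vp adm ne] .
  have Npos: "real N > 0" unfolding N_def by simp
  have finS: "finite S" unfolding S_def by simp
  have key: "ext (slope (I ! i)) (I ! i) / 4 \<le> measure lborel (J i (real (m i) / N)) \<and> m i \<le> N"
    if iS: "i \<in> S" for i
  proof -
    have il: "i < length I" and hi: "hgt (I ! i) > 1 / 2 ^ (k + 1)" using iS unfolding S_def by auto
    have cP: "cpt (I ! i)" using adm_piece(1)[OF adm il] .
    interpret P: cpt "I ! i" by (rule cP)
    have cQ: "cpt (Q i)" unfolding Q_def using cpt_translate[OF cP] .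
    interpret Qc: cpt "Q i" by (rule cQ)
    have cvQ: "convex (Q i)"
    proof -
      have "(\<lambda>p. p + t i) ` (I ! i) = (+) (t i) ` (I ! i)" by (auto simp: add.commute)
      thus ?thesis unfolding Q_def translate_def using convex_translation[OF adm_piece(2)[OF adm il]] by simp
    qed
    note sh = tr_shift[OF cP, where t = "t i"]
    define B where "B = botp (I ! i) + t i"
    define T where "T = topp (I ! i) + t i"
    have B: "B \<in> Q i" "snd B = ymin (Q i)" unfolding B_def Q_def using P.botp tr_mem sh by auto
    have T: "T \<in> Q i" "snd T = ymax (Q i)" unfolding T_def Q_def using P.topp tr_mem sh by auto
    have hQ: "hgt (Q i) = hgt (I ! i)" unfolding Q_def using sh by simp
    have hpos: "hgt (I ! i) > 0" using hi by (smt (verit) zero_less_divide_1_iff zero_less_power)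
    have y0: "0 \<le> ymin (Q i)" "ymax (Q i) \<le> 1"
      using valid_bounds(3)[OF vp adm il B(1)[unfolded Q_def]] valid_bounds(4)[OF vp adm il T(1)[unfolded Q_def]] B T by auto
    have hrel: "1 / real N < hgt (I ! i) / 2"
    proof -
      have "1 / real N = (1 / 2 ^ (k + 1)) / 2" unfolding N_def by (simp add: field_simps)
      thus ?thesis using hi by simp
    qed
    define z where "z = (ymin (Q i) + hgt (I ! i) / 4) * N"
    have z0: "0 \<le> z" unfolding z_def using y0 hpos Npos by simp
    have mz: "real (m i) = of_int \<lceil>z\<rceil>" unfolding m_def z_def[symmetric] using z0 by simp
    have l1: "z \<le> real (m i)" using mz by linarith
    have l2: "real (m i) < z + 1" using mz by linarith
    have ll1: "ymin (Q i) + hgt (I ! i) / 4 \<le> real (m i) / N"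
      using l1 Npos unfolding z_def by (simp add: field_simps)
    have ll2: "real (m i) / N < ymin (Q i) + hgt (I ! i) / 4 + 1 / N"
      using l2 Npos unfolding z_def by (simp add: field_simps)
    have hdef: "hgt (Q i) = ymax (Q i) - ymin (Q i)" unfolding hgt_def ..
    have c1: "4 * (real (m i) / N - ymin (Q i)) \<ge> hgt (Q i)" using ll1 hQ by argo
    have c2: "4 * (ymax (Q i) - real (m i) / N) \<ge> hgt (Q i)" using ll2 hrel hQ hdef by argo
    have "real (m i) / N \<le> 1" using c2 y0 hQ hpos by argo
    hence mN: "m i \<le> N" using Npos by (simp add: field_simps)
    have ylt: "ymin (Q i) < ymax (Q i)" using hQ hpos hdef by linarith
    have "ext ((fst T - fst B) / hgt (Q i)) (Q i) / 4 \<le> measure lborel {x. (x, real (m i) / N) \<in> interior (Q i)}"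
      by (rule chord_measure[OF Qc.cp cvQ Qc.ne B(1) T(1) B(2) T(2) ylt c1 c2])
    moreover have "(fst T - fst B) / hgt (Q i) = slope (I ! i)"
      unfolding slope_def T_def B_def hQ by simp
    moreover have "ext s (Q i) = ext s (I ! i)" for s unfolding Q_def using sh by simp
    ultimately show ?thesis using mN unfolding J_def by simp
  qed
  have "(\<Sum>i\<in>S. ext (slope (I ! i)) (I ! i)) \<le> (\<Sum>i\<in>S. 4 * measure lborel (J i (real (m i) / N)))"
  proof (intro sum_mono)
    fix i assume "i \<in> S"
    from key[OF this] show "ext (slope (I ! i)) (I ! i) \<le> 4 * measure lborel (J i (real (m i) / N))" by argo
  qed
  also have "... = 4 * (\<Sum>j\<in>{..N}. \<Sum>i\<in>{i\<in>S. m i = j}. measure lborel (J i (real (m i) / N)))"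
    by (subst sum.group[OF finS, of "{..N}" m]) (use key in \<open>auto simp: sum_distrib_left\<close>)
  also have "... \<le> 4 * (\<Sum>j\<in>{..N}. C)"
  proof -
    have "(\<Sum>i\<in>{i\<in>S. m i = j}. measure lborel (J i (real (m i) / N))) \<le> C" for j
    proof -
      have "(\<Sum>i\<in>{i\<in>S. m i = j}. measure lborel (J i (real (m i) / N)))
          = (\<Sum>i\<in>{i\<in>S. m i = j}. measure lborel (J i (real j / N)))" by simp
      also have "... \<le> C"
      proof (rule sum_meas_le)
        show "finite {i \<in> S. m i = j}" using finS by simp
        show "J i (real j / real N) \<in> sets lborel" for i unfolding J_def using J_open by simp
        show "disjoint_family_on (\<lambda>i. J i (real j / real N)) {i \<in> S. m i = j}"
          unfolding disjoint_family_on_def J_def Q_def S_def using vp unfolding valid_placement_def by blast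
        show "J i (real j / real N) \<subseteq> {0..C}" if "i \<in> {i \<in> S. m i = j}" for i
        proof
          fix x assume "x \<in> J i (real j / real N)"
          hence "(x, real j / real N) \<in> translate (t i) (I ! i)" unfolding J_def Q_def using interior_subset by blast
          moreover have "i < length I" using that unfolding S_def by auto
          ultimately show "x \<in> {0..C}" using valid_bounds(1,2)[OF vp adm] unfolding C_def by force
        qed
        show "0 \<le> C" by (rule C0)
      qed
      finally show ?thesis .
    qed
    thus ?thesis by (intro mult_left_mono sum_mono) auto
  qed
  also have "... = 4 * (4 * 2 ^ k + 1) * C" unfolding N_def by simp
  finally show ?thesis unfolding S_def C_def .
qed

type_synonym key = "nat \<times> int \<times> nat \<times> int"

definition kk_of :: "key \<Rightarrow> nat" where "kk_of \<kappa> = fst (snd (snd \<kappa>))"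
definition kLW :: "key \<Rightarrow> real" where "kLW \<kappa> = 2 powr (real_of_int (fst (snd \<kappa>)))"
definition kH :: "key \<Rightarrow> real" where "kH \<kappa> = 1 / 2 ^ kk_of \<kappa>"
definition kg :: "key \<Rightarrow> real" where "kg \<kappa> = kLW \<kappa> / 2 ^ fst \<kappa>"
definition kS :: "key \<Rightarrow> real" where "kS \<kappa> = real_of_int (snd (snd (snd \<kappa>))) * kg \<kappa> / kH \<kappa>"
definition kA :: "key \<Rightarrow> real" where "kA \<kappa> = 3 * kLW \<kappa>"
definition kL :: "key \<Rightarrow> real" where "kL \<kappa> = 6 * kLW \<kappa>"
definition kBW :: "key \<Rightarrow> real" where "kBW \<kappa> = 12 * kLW \<kappa>"

lemma kLW_pos: "kLW \<kappa> > 0" unfolding kLW_def by simp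

definition pval :: "key \<Rightarrow> nat \<Rightarrow> real \<Rightarrow> real" where
  "pval \<kappa> r u = 4 * kH \<kappa> * (real r * kL \<kappa> / 2 + u)"

record st =
  cur :: real
  mp :: "key \<Rightarrow> (real \<times> nat \<times> real) option"
  bb1 :: real
  bb2 :: real
  psi :: real

definition st0 :: st where "st0 = \<lparr>cur = 0, mp = Map.empty, bb1 = 0, bb2 = 0, psi = 0\<rparr>"

definition stepk :: "key \<Rightarrow> real \<Rightarrow> st \<Rightarrow> (real \<times> nat \<times> real) \<times> st" where
  "stepk \<kappa> D \<sigma> = (case mp \<sigma> \<kappa> of
     None \<Rightarrow> ((cur \<sigma>, 0, 0), \<sigma>\<lparr>cur := cur \<sigma> + kBW \<kappa>, mp := (mp \<sigma>)(\<kappa> \<mapsto> (cur \<sigma>, 0, D)),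
               bb1 := bb1 \<sigma> + kBW \<kappa>, bb2 := bb2 \<sigma> + 4 * kH \<kappa> * D, psi := psi \<sigma> + pval \<kappa> 0 D\<rparr>)
   | Some (X, r, u) \<Rightarrow>
     (if u + D \<le> kL \<kappa> then
        ((X, r, u), \<sigma>\<lparr>mp := (mp \<sigma>)(\<kappa> \<mapsto> (X, r, u + D)), bb2 := bb2 \<sigma> + 4 * kH \<kappa> * D,
                   psi := psi \<sigma> - pval \<kappa> r u + pval \<kappa> r (u + D)\<rparr>)
      else if Suc r < 2 ^ kk_of \<kappa> then
        ((X, Suc r, 0), \<sigma>\<lparr>mp := (mp \<sigma>)(\<kappa> \<mapsto> (X, Suc r, D)), bb2 := bb2 \<sigma> + 4 * kH \<kappa> * D,
                   psi := psi \<sigma> - pval \<kappa> r u + pval \<kappa> (Suc r) D\<rparr>)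
      else
        ((cur \<sigma>, 0, 0), \<sigma>\<lparr>cur := cur \<sigma> + kBW \<kappa>, mp := (mp \<sigma>)(\<kappa> \<mapsto> (cur \<sigma>, 0, D)),
                   bb2 := bb2 \<sigma> + 4 * kH \<kappa> * D, psi := psi \<sigma> - pval \<kappa> r u + pval \<kappa> 0 D\<rparr>)))"

definition sepd :: "(real \<times> nat \<times> real) \<Rightarrow> key \<Rightarrow> real \<Rightarrow> (real \<times> nat \<times> real) \<Rightarrow> key \<Rightarrow> real \<Rightarrow> bool" where
  "sepd d1 k1 D1 d2 k2 D2 \<longleftrightarrow> fst d1 + kBW k1 \<le> fst d2 \<or> fst d2 + kBW k2 \<le> fst d1 \<or>
     (k1 = k2 \<and> fst d1 = fst d2 \<and> (fst (snd d1) \<noteq> fst (snd d2) \<or>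
        snd (snd d1) + D1 \<le> snd (snd d2) \<or> snd (snd d2) + D2 \<le> snd (snd d1)))"

definition pv :: "st \<Rightarrow> key \<Rightarrow> real" where
  "pv \<sigma> \<kappa> = (case mp \<sigma> \<kappa> of Some (X, r, u) \<Rightarrow> pval \<kappa> r u | None \<Rightarrow> 0)"

definition invr :: "nat \<Rightarrow> (nat \<Rightarrow> real \<times> nat \<times> real) \<Rightarrow> (nat \<Rightarrow> key) \<Rightarrow> (nat \<Rightarrow> real) \<Rightarrow> st \<Rightarrow> bool" where
  "invr m d kap Dv \<sigma> \<longleftrightarrow>
    (\<forall>i<m. 0 \<le> fst (d i) \<and> fst (d i) + kBW (kap i) \<le> cur \<sigma> \<and> 0 \<le> snd (snd (d i)) \<and>
           snd (snd (d i)) + Dv i \<le> kL (kap i) \<and> fst (snd (d i)) < 2 ^ kk_of (kap i)) \<and>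
    (\<forall>i<m. \<forall>j<m. i \<noteq> j \<longrightarrow> sepd (d i) (kap i) (Dv i) (d j) (kap j) (Dv j)) \<and>
    (\<forall>\<kappa> X r u. mp \<sigma> \<kappa> = Some (X, r, u) \<longrightarrow> 0 \<le> X \<and> X + kBW \<kappa> \<le> cur \<sigma> \<and> r < 2 ^ kk_of \<kappa> \<and>
         0 \<le> u \<and> u \<le> kL \<kappa> \<and>
         (\<forall>i<m. fst (d i) + kBW (kap i) \<le> X \<or> X + kBW \<kappa> \<le> fst (d i) \<or>
              (kap i = \<kappa> \<and> fst (d i) = X \<and> (fst (snd (d i)) < r \<or>
                  (fst (snd (d i)) = r \<and> snd (snd (d i)) + Dv i \<le> u))))) \<and>
    (\<forall>k1 k2 v1 v2. k1 \<noteq> k2 \<and> mp \<sigma> k1 = Some v1 \<and> mp \<sigma> k2 = Some v2 \<longrightarrow>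
         fst v1 + kBW k1 \<le> fst v2 \<or> fst v2 + kBW k2 \<le> fst v1) \<and>
    dom (mp \<sigma>) = kap ` {..<m} \<and>
    bb1 \<sigma> = (\<Sum>\<kappa>\<in>dom (mp \<sigma>). kBW \<kappa>) \<and>
    bb2 \<sigma> = (\<Sum>i<m. 4 * kH (kap i) * Dv i) \<and>
    psi \<sigma> = (\<Sum>\<kappa>\<in>dom (mp \<sigma>). pv \<sigma> \<kappa>) \<and>
    cur \<sigma> + psi \<sigma> \<le> bb1 \<sigma> + bb2 \<sigma> \<and> 0 \<le> cur \<sigma>"

lemma inv0: "invr 0 d kap Dv st0"
  unfolding invr_def st0_def by simp

lemma pval_nonneg: "0 \<le> u \<Longrightarrow> 0 \<le> pval \<kappa> r u"
  unfolding pval_def kH_def kL_def using kLW_pos[of \<kappa>] by simp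

lemma kH_pos: "kH \<kappa> > 0" unfolding kH_def by simp

lemma sum_upd:
  fixes f g :: "'a \<Rightarrow> real"
  assumes "finite F" "k \<in> F" "\<And>x. x \<in> F \<Longrightarrow> x \<noteq> k \<Longrightarrow> g x = f x"
  shows "sum g F = sum f F - f k + g k"
proof -
  have "sum g F = g k + sum g (F - {k})" using sum.remove[OF assms(1,2)] by simp
  also have "sum g (F - {k}) = sum f (F - {k})" using assms(3) by (intro sum.cong) auto
  also have "sum f (F - {k}) = sum f F - f k" using sum.remove[OF assms(1,2), of f] by simp
  finally show ?thesis by simp
qed

lemma inv_step:
  assumes I: "invr m d kap Dv \<sigma>"
    and S: "stepk (kap m) (Dv m) \<sigma> = (dm, \<sigma>')"
    and d': "d' m = dm" "\<forall>i<m. d' i = d i"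
    and D: "0 \<le> Dv m" "Dv m \<le> kL (kap m) / 2"
  shows "invr (Suc m) d' kap Dv \<sigma>'"
proof -
  define \<kappa> where "\<kappa> = kap m"
  define D where "D = Dv m"
  have BWp: "kBW k > 0" "kL k > 0" "kBW k = 2 * kL k" for k using kLW_pos[of k] unfolding kBW_def kL_def by auto
  note I' = I[unfolded invr_def]
  have A1: "\<forall>i<m. 0 \<le> fst (d i) \<and> fst (d i) + kBW (kap i) \<le> cur \<sigma> \<and> 0 \<le> snd (snd (d i)) \<and>
           snd (snd (d i)) + Dv i \<le> kL (kap i) \<and> fst (snd (d i)) < 2 ^ kk_of (kap i)"
   and A2: "\<forall>i<m. \<forall>j<m. i \<noteq> j \<longrightarrow> sepd (d i) (kap i) (Dv i) (d j) (kap j) (Dv j)"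
   and A3: "\<forall>k X r u. mp \<sigma> k = Some (X, r, u) \<longrightarrow> 0 \<le> X \<and> X + kBW k \<le> cur \<sigma> \<and> r < 2 ^ kk_of k \<and>
         0 \<le> u \<and> u \<le> kL k \<and>
         (\<forall>i<m. fst (d i) + kBW (kap i) \<le> X \<or> X + kBW k \<le> fst (d i) \<or>
              (kap i = k \<and> fst (d i) = X \<and> (fst (snd (d i)) < r \<or>
                  (fst (snd (d i)) = r \<and> snd (snd (d i)) + Dv i \<le> u))))"
   and A4: "\<forall>k1 k2 v1 v2. k1 \<noteq> k2 \<and> mp \<sigma> k1 = Some v1 \<and> mp \<sigma> k2 = Some v2 \<longrightarrow>
         fst v1 + kBW k1 \<le> fst v2 \<or> fst v2 + kBW k2 \<le> fst v1"
   and A5: "dom (mp \<sigma>) = kap ` {..<m}" "bb1 \<sigma> = (\<Sum>\<kappa>\<in>dom (mp \<sigma>). kBW \<kappa>)"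
    "bb2 \<sigma> = (\<Sum>i<m. 4 * kH (kap i) * Dv i)" "psi \<sigma> = (\<Sum>\<kappa>\<in>dom (mp \<sigma>). pv \<sigma> \<kappa>)"
    "cur \<sigma> + psi \<sigma> \<le> bb1 \<sigma> + bb2 \<sigma>" "0 \<le> cur \<sigma>"
    using I unfolding invr_def by argo+
  have fin: "finite (dom (mp \<sigma>))" using A5(1) by simp
  have D0: "0 \<le> D" "D \<le> kL \<kappa> / 2" using D unfolding D_def \<kappa>_def by auto
  have dsplit: "\<And>i. i < Suc m \<longleftrightarrow> i < m \<or> i = m" by auto
  have b2': "(\<Sum>i<Suc m. 4 * kH (kap i) * Dv i) = bb2 \<sigma> + 4 * kH \<kappa> * D"
    using A5(3) unfolding \<kappa>_def D_def by simp
  show ?thesis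
  proof (cases "mp \<sigma> \<kappa>")
    case None
    have dm: "dm = (cur \<sigma>, 0, 0)" and \<sigma>': "\<sigma>' = \<sigma>\<lparr>cur := cur \<sigma> + kBW \<kappa>, mp := (mp \<sigma>)(\<kappa> \<mapsto> (cur \<sigma>, 0, D)),
               bb1 := bb1 \<sigma> + kBW \<kappa>, bb2 := bb2 \<sigma> + 4 * kH \<kappa> * D, psi := psi \<sigma> + pval \<kappa> 0 D\<rparr>"
      using S None unfolding stepk_def \<kappa>_def[symmetric] D_def[symmetric] by auto
    have kn: "\<kappa> \<notin> dom (mp \<sigma>)" using None by auto
    have pv': "pv \<sigma>' k = (if k = \<kappa> then pval \<kappa> 0 D else pv \<sigma> k)" for k
      unfolding \<sigma>' pv_def by simp
    have c1: "\<forall>i<Suc m. 0 \<le> fst (d' i) \<and> fst (d' i) + kBW (kap i) \<le> cur \<sigma>' \<and> 0 \<le> snd (snd (d' i)) \<and>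
           snd (snd (d' i)) + Dv i \<le> kL (kap i) \<and> fst (snd (d' i)) < 2 ^ kk_of (kap i)"
    proof (intro allI impI)
      fix i assume "i < Suc m"
      hence "i < m \<or> i = m" by auto
      thus "0 \<le> fst (d' i) \<and> fst (d' i) + kBW (kap i) \<le> cur \<sigma>' \<and> 0 \<le> snd (snd (d' i)) \<and>
           snd (snd (d' i)) + Dv i \<le> kL (kap i) \<and> fst (snd (d' i)) < 2 ^ kk_of (kap i)"
      proof
        assume im: "i < m"
        show ?thesis using A1[rule_format, OF im] d'(2) im \<sigma>' BWp[of \<kappa>] by auto
      next
        assume im: "i = m"
        show ?thesis using im d'(1) dm \<sigma>' A5(6) D BWp[of \<kappa>] unfolding \<kappa>_def D_def by auto
      qed
    qed
    have c2: "\<forall>i<Suc m. \<forall>j<Suc m. i \<noteq> j \<longrightarrow> sepd (d' i) (kap i) (Dv i) (d' j) (kap j) (Dv j)"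
    proof (intro allI impI)
      fix i j assume ij: "i < Suc m" "j < Suc m" "i \<noteq> j"
      have lt: "fst (d' i) + kBW (kap i) \<le> fst (d' m)" if "i < m" for i
        using A1[rule_format, OF that] d' dm that by auto
      show "sepd (d' i) (kap i) (Dv i) (d' j) (kap j) (Dv j)"
      proof (cases "i < m \<and> j < m")
        case True thus ?thesis using A2 d'(2) ij by auto
      next
        case False
        hence "(i < m \<and> j = m) \<or> (i = m \<and> j < m)" using ij by auto
        thus ?thesis using lt unfolding sepd_def by auto
      qed
    qed
    have c3: "\<forall>k X r u. mp \<sigma>' k = Some (X, r, u) \<longrightarrow> 0 \<le> X \<and> X + kBW k \<le> cur \<sigma>' \<and> r < 2 ^ kk_of k \<and>
         0 \<le> u \<and> u \<le> kL k \<and>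
         (\<forall>i<Suc m. fst (d' i) + kBW (kap i) \<le> X \<or> X + kBW k \<le> fst (d' i) \<or>
              (kap i = k \<and> fst (d' i) = X \<and> (fst (snd (d' i)) < r \<or>
                  (fst (snd (d' i)) = r \<and> snd (snd (d' i)) + Dv i \<le> u))))"
    proof (intro allI impI)
      fix k X r u assume e: "mp \<sigma>' k = Some (X, r, u)"
      show "0 \<le> X \<and> X + kBW k \<le> cur \<sigma>' \<and> r < 2 ^ kk_of k \<and> 0 \<le> u \<and> u \<le> kL k \<and>
         (\<forall>i<Suc m. fst (d' i) + kBW (kap i) \<le> X \<or> X + kBW k \<le> fst (d' i) \<or>
              (kap i = k \<and> fst (d' i) = X \<and> (fst (snd (d' i)) < r \<or>
                  (fst (snd (d' i)) = r \<and> snd (snd (d' i)) + Dv i \<le> u))))"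
      proof (cases "k = \<kappa>")
        case True
        hence "X = cur \<sigma>" "r = 0" "u = D" using e \<sigma>' by auto
        thus ?thesis using True A1 d' dm \<sigma>' A5(6) D BWp unfolding dsplit \<kappa>_def D_def by auto
      next
        case False
        hence e': "mp \<sigma> k = Some (X, r, u)" using e \<sigma>' by auto
        from A3[rule_format, OF this] show ?thesis using d' dm \<sigma>' BWp[of \<kappa>] unfolding dsplit by auto
      qed
    qed
    have c4: "\<forall>k1 k2 v1 v2. k1 \<noteq> k2 \<and> mp \<sigma>' k1 = Some v1 \<and> mp \<sigma>' k2 = Some v2 \<longrightarrow>
         fst v1 + kBW k1 \<le> fst v2 \<or> fst v2 + kBW k2 \<le> fst v1"
    proof (intro allI impI)
      fix k1 k2 v1 v2 assume h: "k1 \<noteq> k2 \<and> mp \<sigma>' k1 = Some v1 \<and> mp \<sigma>' k2 = Some v2"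
      have bnd: "fst v + kBW k \<le> cur \<sigma>" if "mp \<sigma> k = Some v" for k v
        using A3[rule_format, of k "fst v" "fst (snd v)" "snd (snd v)"] that by auto
      show "fst v1 + kBW k1 \<le> fst v2 \<or> fst v2 + kBW k2 \<le> fst v1"
        using h A4[rule_format, of k1 k2 v1 v2] bnd[of k1 v1] bnd[of k2 v2] \<sigma>' by (auto split: if_splits)
    qed
    have c5: "dom (mp \<sigma>') = kap ` {..<Suc m}" using A5(1) \<sigma>' unfolding \<kappa>_def by (auto simp: lessThan_Suc)
    have domeq: "dom (mp \<sigma>') = insert \<kappa> (dom (mp \<sigma>))" using \<sigma>' by auto
    have c6: "bb1 \<sigma>' = (\<Sum>k\<in>dom (mp \<sigma>'). kBW k)" using A5(2) \<sigma>' kn fin by (simp add: domeq)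
    have c7: "psi \<sigma>' = (\<Sum>k\<in>dom (mp \<sigma>'). pv \<sigma>' k)"
    proof -
      have "(\<Sum>k\<in>dom (mp \<sigma>'). pv \<sigma>' k) = pv \<sigma>' \<kappa> + (\<Sum>k\<in>dom (mp \<sigma>). pv \<sigma>' k)"
        unfolding domeq using kn fin by (simp add: sum.insert)
      also have "(\<Sum>k\<in>dom (mp \<sigma>). pv \<sigma>' k) = (\<Sum>k\<in>dom (mp \<sigma>). pv \<sigma> k)"
        using kn by (intro sum.cong) (auto simp: pv')
      also have "pv \<sigma>' \<kappa> = pval \<kappa> 0 D" using pv' by simp
      finally have calc: "(\<Sum>k\<in>dom (mp \<sigma>'). pv \<sigma>' k) = pval \<kappa> 0 D + (\<Sum>k\<in>dom (mp \<sigma>). pv \<sigma> k)" .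
      have ps: "psi \<sigma>' = psi \<sigma> + pval \<kappa> 0 D" using \<sigma>' by simp
      show ?thesis using ps A5(4) calc by linarith
    qed
    have c8: "cur \<sigma>' + psi \<sigma>' \<le> bb1 \<sigma>' + bb2 \<sigma>'" using A5(5) \<sigma>' unfolding pval_def by simp
    show ?thesis unfolding invr_def using c1 c2 c3 c4 c5 c6 c7 c8 b2' \<sigma>' A5(6) BWp[of \<kappa>] by simp
  next
    case (Some v)
    obtain X r u where v: "v = (X, r, u)" by (cases v) auto
    have e: "mp \<sigma> \<kappa> = Some (X, r, u)" using Some v by simp
    note a3 = A3[rule_format, OF e]
    have kin: "\<kappa> \<in> dom (mp \<sigma>)" using e by auto
    have c5: "dom (mp \<sigma>) = kap ` {..<Suc m}" using A5(1) kin unfolding \<kappa>_def by (auto simp: lessThan_Suc)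
    have a3': "0 \<le> X" "X + kBW \<kappa> \<le> cur \<sigma>" "r < 2 ^ kk_of \<kappa>" "0 \<le> u" "u \<le> kL \<kappa>"
      "\<forall>i<m. fst (d i) + kBW (kap i) \<le> X \<or> X + kBW \<kappa> \<le> fst (d i) \<or>
              (kap i = \<kappa> \<and> fst (d i) = X \<and> (fst (snd (d i)) < r \<or>
                  (fst (snd (d i)) = r \<and> snd (snd (d i)) + Dv i \<le> u)))" using a3 by auto
    have oth: "\<And>k X' r' u'. k \<noteq> \<kappa> \<Longrightarrow> mp \<sigma> k = Some (X', r', u') \<Longrightarrow> X + kBW \<kappa> \<le> X' \<or> X' + kBW k \<le> X"
      using A4[rule_format, of \<kappa> _ "(X, r, u)"] e by fastforce
    have bndk: "fst v + kBW k \<le> cur \<sigma>" if "mp \<sigma> k = Some v" for k v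
      using A3[rule_format, of k "fst v" "fst (snd v)" "snd (snd v)"] that by auto
    have sumchg: "\<And>g. (\<And>k. k \<noteq> \<kappa> \<Longrightarrow> g k = pv \<sigma> k) \<Longrightarrow>
        (\<Sum>k\<in>dom (mp \<sigma>). g k) = psi \<sigma> - pval \<kappa> r u + g \<kappa>"
    proof -
      fix g assume "\<And>k. k \<noteq> \<kappa> \<Longrightarrow> g k = pv \<sigma> k"
      hence "(\<Sum>k\<in>dom (mp \<sigma>). g k) = (\<Sum>k\<in>dom (mp \<sigma>). pv \<sigma> k) - pv \<sigma> \<kappa> + g \<kappa>"
        by (intro sum_upd[OF fin kin]) auto
      thus "(\<Sum>k\<in>dom (mp \<sigma>). g k) = psi \<sigma> - pval \<kappa> r u + g \<kappa>" using A5(4) e unfolding pv_def by simp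
    qed
    show ?thesis
    proof (cases "u + D \<le> kL \<kappa>")
      case fit: True
      have dm: "dm = (X, r, u)" and \<sigma>': "\<sigma>' = \<sigma>\<lparr>mp := (mp \<sigma>)(\<kappa> \<mapsto> (X, r, u + D)), bb2 := bb2 \<sigma> + 4 * kH \<kappa> * D,
                   psi := psi \<sigma> - pval \<kappa> r u + pval \<kappa> r (u + D)\<rparr>"
        using S e fit unfolding stepk_def \<kappa>_def[symmetric] D_def[symmetric] by auto
      have c1: "\<forall>i<Suc m. 0 \<le> fst (d' i) \<and> fst (d' i) + kBW (kap i) \<le> cur \<sigma>' \<and> 0 \<le> snd (snd (d' i)) \<and>
           snd (snd (d' i)) + Dv i \<le> kL (kap i) \<and> fst (snd (d' i)) < 2 ^ kk_of (kap i)"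
      proof (intro allI impI)
        fix i assume "i < Suc m"
        hence "i < m \<or> i = m" by auto
        thus "0 \<le> fst (d' i) \<and> fst (d' i) + kBW (kap i) \<le> cur \<sigma>' \<and> 0 \<le> snd (snd (d' i)) \<and>
             snd (snd (d' i)) + Dv i \<le> kL (kap i) \<and> fst (snd (d' i)) < 2 ^ kk_of (kap i)"
        proof
          assume im: "i < m"
          show ?thesis using A1[rule_format, OF im] d'(2) im \<sigma>' by auto
        next
          assume im: "i = m"
          show ?thesis using im d'(1) dm \<sigma>' a3' fit unfolding \<kappa>_def D_def by auto
        qed
      qed
      have c2: "\<forall>i<Suc m. \<forall>j<Suc m. i \<noteq> j \<longrightarrow> sepd (d' i) (kap i) (Dv i) (d' j) (kap j) (Dv j)"
      proof (intro allI impI)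
        fix i j assume ij: "i < Suc m" "j < Suc m" "i \<noteq> j"
        have lt: "sepd (d' i) (kap i) (Dv i) (d' m) (kap m) (Dv m) \<and> sepd (d' m) (kap m) (Dv m) (d' i) (kap i) (Dv i)" if "i < m" for i
          using a3'(6)[rule_format, OF that] d' dm that unfolding sepd_def \<kappa>_def by auto
        show "sepd (d' i) (kap i) (Dv i) (d' j) (kap j) (Dv j)"
        proof (cases "i < m \<and> j < m")
          case True thus ?thesis using A2 d'(2) ij by auto
        next
          case False
          hence "(i < m \<and> j = m) \<or> (i = m \<and> j < m)" using ij by auto
          thus ?thesis using lt by auto
        qed
      qed
      have c3: "\<forall>k X r u. mp \<sigma>' k = Some (X, r, u) \<longrightarrow> 0 \<le> X \<and> X + kBW k \<le> cur \<sigma>' \<and> r < 2 ^ kk_of k \<and>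
           0 \<le> u \<and> u \<le> kL k \<and>
           (\<forall>i<Suc m. fst (d' i) + kBW (kap i) \<le> X \<or> X + kBW k \<le> fst (d' i) \<or>
                (kap i = k \<and> fst (d' i) = X \<and> (fst (snd (d' i)) < r \<or>
                    (fst (snd (d' i)) = r \<and> snd (snd (d' i)) + Dv i \<le> u))))"
      proof (intro allI impI)
        fix k X1 r1 u1 assume e1: "mp \<sigma>' k = Some (X1, r1, u1)"
        show "0 \<le> X1 \<and> X1 + kBW k \<le> cur \<sigma>' \<and> r1 < 2 ^ kk_of k \<and> 0 \<le> u1 \<and> u1 \<le> kL k \<and>
           (\<forall>i<Suc m. fst (d' i) + kBW (kap i) \<le> X1 \<or> X1 + kBW k \<le> fst (d' i) \<or>
                (kap i = k \<and> fst (d' i) = X1 \<and> (fst (snd (d' i)) < r1 \<or>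
                    (fst (snd (d' i)) = r1 \<and> snd (snd (d' i)) + Dv i \<le> u1))))"
        proof (cases "k = \<kappa>")
          case True
          hence v1: "X1 = X" "r1 = r" "u1 = u + D" using e1 \<sigma>' by auto
          show ?thesis
          proof (intro conjI allI impI)
            fix i assume "i < Suc m"
            hence "i < m \<or> i = m" by auto
            thus "fst (d' i) + kBW (kap i) \<le> X1 \<or> X1 + kBW k \<le> fst (d' i) \<or>
                (kap i = k \<and> fst (d' i) = X1 \<and> (fst (snd (d' i)) < r1 \<or>
                    (fst (snd (d' i)) = r1 \<and> snd (snd (d' i)) + Dv i \<le> u1)))"
            proof
              assume im: "i < m"
              show ?thesis using a3'(6)[rule_format, OF im] d'(2) im v1 True D0 by auto
            next
              assume im: "i = m"
              show ?thesis using im d'(1) dm v1 True unfolding \<kappa>_def D_def by auto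
            qed
          qed (use v1 True a3' fit D0 \<sigma>' in auto)
        next
          case False
          hence e': "mp \<sigma> k = Some (X1, r1, u1)" using e1 \<sigma>' by auto
          note o = oth[OF False e']
          from A3[rule_format, OF e'] show ?thesis using d' dm \<sigma>' o \<kappa>_def unfolding less_Suc_eq by auto
        qed
      qed
      have c4: "\<forall>k1 k2 v1 v2. k1 \<noteq> k2 \<and> mp \<sigma>' k1 = Some v1 \<and> mp \<sigma>' k2 = Some v2 \<longrightarrow>
           fst v1 + kBW k1 \<le> fst v2 \<or> fst v2 + kBW k2 \<le> fst v1"
      proof (intro allI impI)
        fix k1 k2 v1 v2 assume h: "k1 \<noteq> k2 \<and> mp \<sigma>' k1 = Some v1 \<and> mp \<sigma>' k2 = Some v2"
        have ex: "\<exists>w. mp \<sigma> k = Some w \<and> fst w = fst v" if "mp \<sigma>' k = Some v" for k v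
          using that e \<sigma>' by (cases "k = \<kappa>") auto
        obtain w1 w2 where "mp \<sigma> k1 = Some w1" "fst w1 = fst v1" "mp \<sigma> k2 = Some w2" "fst w2 = fst v2"
          using ex h by blast
        thus "fst v1 + kBW k1 \<le> fst v2 \<or> fst v2 + kBW k2 \<le> fst v1"
          using A4[rule_format, of k1 k2 w1 w2] h by auto
      qed
      have domeq: "dom (mp \<sigma>') = dom (mp \<sigma>)" using \<sigma>' kin by auto
      have c7: "psi \<sigma>' = (\<Sum>k\<in>dom (mp \<sigma>'). pv \<sigma>' k)"
      proof -
        have "(\<Sum>k\<in>dom (mp \<sigma>'). pv \<sigma>' k) = psi \<sigma> - pval \<kappa> r u + pv \<sigma>' \<kappa>"
          unfolding domeq by (rule sumchg) (use \<sigma>' in \<open>simp add: pv_def\<close>)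
        thus ?thesis using \<sigma>' by (simp add: pv_def)
      qed
      have c8: "cur \<sigma>' + psi \<sigma>' \<le> bb1 \<sigma>' + bb2 \<sigma>'" using A5(5) \<sigma>' unfolding pval_def by (simp add: algebra_simps)
      show ?thesis unfolding invr_def using c1 c2 c3 c4 c5 c7 c8 b2' \<sigma>' A5(2,6) domeq by simp
    next
      case nofit: False
      have uL: "u > kL \<kappa> / 2" using nofit D unfolding \<kappa>_def D_def by simp
      show ?thesis
      proof (cases "Suc r < 2 ^ kk_of \<kappa>")
        case row: True
        have dm: "dm = (X, Suc r, 0)" and \<sigma>': "\<sigma>' = \<sigma>\<lparr>mp := (mp \<sigma>)(\<kappa> \<mapsto> (X, Suc r, D)), bb2 := bb2 \<sigma> + 4 * kH \<kappa> * D,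
                   psi := psi \<sigma> - pval \<kappa> r u + pval \<kappa> (Suc r) D\<rparr>"
          using S e nofit row unfolding stepk_def \<kappa>_def[symmetric] D_def[symmetric] by auto
        have c1: "\<forall>i<Suc m. 0 \<le> fst (d' i) \<and> fst (d' i) + kBW (kap i) \<le> cur \<sigma>' \<and> 0 \<le> snd (snd (d' i)) \<and>
             snd (snd (d' i)) + Dv i \<le> kL (kap i) \<and> fst (snd (d' i)) < 2 ^ kk_of (kap i)"
        proof (intro allI impI)
          fix i assume "i < Suc m"
          hence "i < m \<or> i = m" by auto
          thus "0 \<le> fst (d' i) \<and> fst (d' i) + kBW (kap i) \<le> cur \<sigma>' \<and> 0 \<le> snd (snd (d' i)) \<and>
               snd (snd (d' i)) + Dv i \<le> kL (kap i) \<and> fst (snd (d' i)) < 2 ^ kk_of (kap i)"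
          proof
            assume im: "i < m"
            show ?thesis using A1[rule_format, OF im] d'(2) im \<sigma>' by auto
          next
            assume im: "i = m"
            show ?thesis using im d'(1) dm \<sigma>' a3' row D0 BWp[of \<kappa>] unfolding \<kappa>_def D_def by auto
          qed
        qed
        have c2: "\<forall>i<Suc m. \<forall>j<Suc m. i \<noteq> j \<longrightarrow> sepd (d' i) (kap i) (Dv i) (d' j) (kap j) (Dv j)"
        proof (intro allI impI)
          fix i j assume ij: "i < Suc m" "j < Suc m" "i \<noteq> j"
          have lt: "sepd (d' i) (kap i) (Dv i) (d' m) (kap m) (Dv m) \<and> sepd (d' m) (kap m) (Dv m) (d' i) (kap i) (Dv i)" if "i < m" for i
            using a3'(6)[rule_format, OF that] d' dm that unfolding sepd_def \<kappa>_def by auto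
          show "sepd (d' i) (kap i) (Dv i) (d' j) (kap j) (Dv j)"
          proof (cases "i < m \<and> j < m")
            case True thus ?thesis using A2 d'(2) ij by auto
          next
            case False
            hence "(i < m \<and> j = m) \<or> (i = m \<and> j < m)" using ij by auto
            thus ?thesis using lt by auto
          qed
        qed
        have c3: "\<forall>k X r u. mp \<sigma>' k = Some (X, r, u) \<longrightarrow> 0 \<le> X \<and> X + kBW k \<le> cur \<sigma>' \<and> r < 2 ^ kk_of k \<and>
             0 \<le> u \<and> u \<le> kL k \<and>
             (\<forall>i<Suc m. fst (d' i) + kBW (kap i) \<le> X \<or> X + kBW k \<le> fst (d' i) \<or>
                  (kap i = k \<and> fst (d' i) = X \<and> (fst (snd (d' i)) < r \<or>
                      (fst (snd (d' i)) = r \<and> snd (snd (d' i)) + Dv i \<le> u))))"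
        proof (intro allI impI)
          fix k X1 r1 u1 assume e1: "mp \<sigma>' k = Some (X1, r1, u1)"
          show "0 \<le> X1 \<and> X1 + kBW k \<le> cur \<sigma>' \<and> r1 < 2 ^ kk_of k \<and> 0 \<le> u1 \<and> u1 \<le> kL k \<and>
             (\<forall>i<Suc m. fst (d' i) + kBW (kap i) \<le> X1 \<or> X1 + kBW k \<le> fst (d' i) \<or>
                  (kap i = k \<and> fst (d' i) = X1 \<and> (fst (snd (d' i)) < r1 \<or>
                      (fst (snd (d' i)) = r1 \<and> snd (snd (d' i)) + Dv i \<le> u1))))"
          proof (cases "k = \<kappa>")
            case True
            hence v1: "X1 = X" "r1 = Suc r" "u1 = D" using e1 \<sigma>' by auto
            show ?thesis
            proof (intro conjI allI impI)
              fix i assume "i < Suc m"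
              hence "i < m \<or> i = m" by auto
              thus "fst (d' i) + kBW (kap i) \<le> X1 \<or> X1 + kBW k \<le> fst (d' i) \<or>
                  (kap i = k \<and> fst (d' i) = X1 \<and> (fst (snd (d' i)) < r1 \<or>
                      (fst (snd (d' i)) = r1 \<and> snd (snd (d' i)) + Dv i \<le> u1)))"
              proof
                assume im: "i < m"
                show ?thesis using a3'(6)[rule_format, OF im] d'(2) im v1 True by auto
              next
                assume im: "i = m"
                show ?thesis using im d'(1) dm v1 True unfolding \<kappa>_def D_def by auto
              qed
            qed (use v1 True a3' row D0 BWp[of \<kappa>] \<sigma>' in auto)
          next
            case False
            hence e': "mp \<sigma> k = Some (X1, r1, u1)" using e1 \<sigma>' by auto
            note o = oth[OF False e']
            from A3[rule_format, OF e'] show ?thesis using d' dm \<sigma>' o \<kappa>_def unfolding less_Suc_eq by auto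
          qed
        qed
        have c4: "\<forall>k1 k2 v1 v2. k1 \<noteq> k2 \<and> mp \<sigma>' k1 = Some v1 \<and> mp \<sigma>' k2 = Some v2 \<longrightarrow>
             fst v1 + kBW k1 \<le> fst v2 \<or> fst v2 + kBW k2 \<le> fst v1"
        proof (intro allI impI)
          fix k1 k2 v1 v2 assume h: "k1 \<noteq> k2 \<and> mp \<sigma>' k1 = Some v1 \<and> mp \<sigma>' k2 = Some v2"
          have ex: "\<exists>w. mp \<sigma> k = Some w \<and> fst w = fst v" if "mp \<sigma>' k = Some v" for k v
            using that e \<sigma>' by (cases "k = \<kappa>") auto
          obtain w1 w2 where "mp \<sigma> k1 = Some w1" "fst w1 = fst v1" "mp \<sigma> k2 = Some w2" "fst w2 = fst v2"
            using ex h by blast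
          thus "fst v1 + kBW k1 \<le> fst v2 \<or> fst v2 + kBW k2 \<le> fst v1"
            using A4[rule_format, of k1 k2 w1 w2] h by auto
        qed
        have domeq: "dom (mp \<sigma>') = dom (mp \<sigma>)" using \<sigma>' kin by auto
        have c7: "psi \<sigma>' = (\<Sum>k\<in>dom (mp \<sigma>'). pv \<sigma>' k)"
        proof -
          have "(\<Sum>k\<in>dom (mp \<sigma>'). pv \<sigma>' k) = psi \<sigma> - pval \<kappa> r u + pv \<sigma>' \<kappa>"
            unfolding domeq by (rule sumchg) (use \<sigma>' in \<open>simp add: pv_def\<close>)
          thus ?thesis using \<sigma>' by (simp add: pv_def)
        qed
        have "pval \<kappa> (Suc r) D - pval \<kappa> r u \<le> 4 * kH \<kappa> * D"
        proof -
          have "pval \<kappa> (Suc r) D - pval \<kappa> r u = 4 * kH \<kappa> * (kL \<kappa> / 2 + D - u)"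
            unfolding pval_def by (simp add: algebra_simps)
          also have "... \<le> 4 * kH \<kappa> * D" using uL kH_pos[of \<kappa>] by (intro mult_left_mono) auto
          finally show ?thesis .
        qed
        hence c8: "cur \<sigma>' + psi \<sigma>' \<le> bb1 \<sigma>' + bb2 \<sigma>'" using A5(5) \<sigma>' by simp
        show ?thesis unfolding invr_def using c1 c2 c3 c4 c5 c7 c8 b2' \<sigma>' A5(2,6) domeq by simp
      next
        case blk: False
        have dm: "dm = (cur \<sigma>, 0, 0)" and \<sigma>': "\<sigma>' = \<sigma>\<lparr>cur := cur \<sigma> + kBW \<kappa>, mp := (mp \<sigma>)(\<kappa> \<mapsto> (cur \<sigma>, 0, D)),
                   bb2 := bb2 \<sigma> + 4 * kH \<kappa> * D, psi := psi \<sigma> - pval \<kappa> r u + pval \<kappa> 0 D\<rparr>"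
          using S e nofit blk unfolding stepk_def \<kappa>_def[symmetric] D_def[symmetric] by auto
        have c1: "\<forall>i<Suc m. 0 \<le> fst (d' i) \<and> fst (d' i) + kBW (kap i) \<le> cur \<sigma>' \<and> 0 \<le> snd (snd (d' i)) \<and>
               snd (snd (d' i)) + Dv i \<le> kL (kap i) \<and> fst (snd (d' i)) < 2 ^ kk_of (kap i)"
        proof (intro allI impI)
          fix i assume "i < Suc m"
          hence "i < m \<or> i = m" by auto
          thus "0 \<le> fst (d' i) \<and> fst (d' i) + kBW (kap i) \<le> cur \<sigma>' \<and> 0 \<le> snd (snd (d' i)) \<and>
               snd (snd (d' i)) + Dv i \<le> kL (kap i) \<and> fst (snd (d' i)) < 2 ^ kk_of (kap i)"
          proof
            assume im: "i < m"
            show ?thesis using A1[rule_format, OF im] d'(2) im \<sigma>' BWp[of \<kappa>] by auto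
          next
            assume im: "i = m"
            show ?thesis using im d'(1) dm \<sigma>' A5(6) D BWp[of \<kappa>] unfolding \<kappa>_def D_def by auto
          qed
        qed
        have c2: "\<forall>i<Suc m. \<forall>j<Suc m. i \<noteq> j \<longrightarrow> sepd (d' i) (kap i) (Dv i) (d' j) (kap j) (Dv j)"
        proof (intro allI impI)
          fix i j assume ij: "i < Suc m" "j < Suc m" "i \<noteq> j"
          have lt: "fst (d' i) + kBW (kap i) \<le> fst (d' m)" if "i < m" for i
            using A1[rule_format, OF that] d' dm that by auto
          show "sepd (d' i) (kap i) (Dv i) (d' j) (kap j) (Dv j)"
          proof (cases "i < m \<and> j < m")
            case True thus ?thesis using A2 d'(2) ij by auto
          next
            case False
            hence "(i < m \<and> j = m) \<or> (i = m \<and> j < m)" using ij by auto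
            thus ?thesis using lt unfolding sepd_def by auto
          qed
        qed
        have c3: "\<forall>k X r u. mp \<sigma>' k = Some (X, r, u) \<longrightarrow> 0 \<le> X \<and> X + kBW k \<le> cur \<sigma>' \<and> r < 2 ^ kk_of k \<and>
             0 \<le> u \<and> u \<le> kL k \<and>
             (\<forall>i<Suc m. fst (d' i) + kBW (kap i) \<le> X \<or> X + kBW k \<le> fst (d' i) \<or>
                  (kap i = k \<and> fst (d' i) = X \<and> (fst (snd (d' i)) < r \<or>
                      (fst (snd (d' i)) = r \<and> snd (snd (d' i)) + Dv i \<le> u))))"
        proof (intro allI impI)
          fix k X r u assume e1: "mp \<sigma>' k = Some (X, r, u)"
          show "0 \<le> X \<and> X + kBW k \<le> cur \<sigma>' \<and> r < 2 ^ kk_of k \<and> 0 \<le> u \<and> u \<le> kL k \<and>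
             (\<forall>i<Suc m. fst (d' i) + kBW (kap i) \<le> X \<or> X + kBW k \<le> fst (d' i) \<or>
                  (kap i = k \<and> fst (d' i) = X \<and> (fst (snd (d' i)) < r \<or>
                      (fst (snd (d' i)) = r \<and> snd (snd (d' i)) + Dv i \<le> u))))"
          proof (cases "k = \<kappa>")
            case True
            hence "X = cur \<sigma>" "r = 0" "u = D" using e1 \<sigma>' by auto
            thus ?thesis using True A1 d' dm \<sigma>' A5(6) D BWp unfolding dsplit \<kappa>_def D_def by auto
          next
            case False
            hence e': "mp \<sigma> k = Some (X, r, u)" using e1 \<sigma>' by auto
            from A3[rule_format, OF e'] show ?thesis using d' dm \<sigma>' BWp[of \<kappa>] unfolding dsplit by auto
          qed
        qed
        have c4: "\<forall>k1 k2 v1 v2. k1 \<noteq> k2 \<and> mp \<sigma>' k1 = Some v1 \<and> mp \<sigma>' k2 = Some v2 \<longrightarrow>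
             fst v1 + kBW k1 \<le> fst v2 \<or> fst v2 + kBW k2 \<le> fst v1"
        proof (intro allI impI)
          fix k1 k2 v1 v2 assume h: "k1 \<noteq> k2 \<and> mp \<sigma>' k1 = Some v1 \<and> mp \<sigma>' k2 = Some v2"
          show "fst v1 + kBW k1 \<le> fst v2 \<or> fst v2 + kBW k2 \<le> fst v1"
            using h A4[rule_format, of k1 k2 v1 v2] bndk[of k1 v1] bndk[of k2 v2] \<sigma>' by (auto split: if_splits)
        qed
        have domeq: "dom (mp \<sigma>') = dom (mp \<sigma>)" using \<sigma>' kin by auto
        have c7: "psi \<sigma>' = (\<Sum>k\<in>dom (mp \<sigma>'). pv \<sigma>' k)"
        proof -
          have "(\<Sum>k\<in>dom (mp \<sigma>'). pv \<sigma>' k) = psi \<sigma> - pval \<kappa> r u + pv \<sigma>' \<kappa>"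
            unfolding domeq by (rule sumchg) (use \<sigma>' in \<open>simp add: pv_def\<close>)
          thus ?thesis using \<sigma>' by (simp add: pv_def)
        qed
        have "kBW \<kappa> \<le> pval \<kappa> r u"
        proof -
          have r1: "Suc r = 2 ^ kk_of \<kappa>" using a3'(3) blk by simp
          have "real (Suc r) = 2 ^ kk_of \<kappa>" using arg_cong[OF r1, of real] by simp
          hence "kH \<kappa> * (real r + 1) = 1" unfolding kH_def by simp
          moreover have "4 * kH \<kappa> * (real r * kL \<kappa> / 2 + kL \<kappa> / 2) = 2 * kL \<kappa> * (kH \<kappa> * (real r + 1))"
            by (simp add: algebra_simps)
          ultimately have "kBW \<kappa> = 4 * kH \<kappa> * (real r * kL \<kappa> / 2 + kL \<kappa> / 2)" using BWp(3)[of \<kappa>] by simp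
          also have "... \<le> 4 * kH \<kappa> * (real r * kL \<kappa> / 2 + u)" using uL kH_pos[of \<kappa>] by (intro mult_left_mono) auto
          finally show ?thesis unfolding pval_def .
        qed
        hence c8: "cur \<sigma>' + psi \<sigma>' \<le> bb1 \<sigma>' + bb2 \<sigma>'" using A5(5) \<sigma>' unfolding pval_def by simp
        show ?thesis unfolding invr_def using c1 c2 c3 c4 c5 c7 c8 b2' \<sigma>' A5(2,6) domeq BWp[of \<kappa>] by simp
      qed
    qed
  qed
qed

definition lvl :: "nat \<Rightarrow> nat" where "lvl i = (LEAST a. i + 1 \<le> 4 ^ a)"
definition ew :: "point set \<Rightarrow> int" where "ew P = \<lceil>log 2 (wid P)\<rceil>"
definition kc :: "point set \<Rightarrow> nat" where "kc P = nat \<lfloor>- log 2 (hgt P)\<rfloor>"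
definition kkk :: "nat \<Rightarrow> point set \<Rightarrow> nat" where "kkk i P = min (kc P) (2 * lvl i)"
definition jj :: "nat \<Rightarrow> point set \<Rightarrow> int" where
  "jj i P = (if 2 * lvl i \<le> kc P then 0
             else round (slope P * (1 / 2 ^ kkk i P) / (2 powr real_of_int (ew P) / 2 ^ lvl i)))"
definition key :: "nat \<Rightarrow> point set \<Rightarrow> key" where "key i P = (lvl i, ew P, kkk i P, jj i P)"
definition DD :: "nat \<Rightarrow> point set \<Rightarrow> real" where "DD i P = ext (kS (key i P)) P"

lemma key_simps: "kk_of (key i P) = kkk i P" "kLW (key i P) = 2 powr real_of_int (ew P)"
  "kH (key i P) = 1 / 2 ^ kkk i P" "kg (key i P) = 2 powr real_of_int (ew P) / 2 ^ lvl i"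
  "kS (key i P) = real_of_int (jj i P) * (2 powr real_of_int (ew P) / 2 ^ lvl i) / (1 / 2 ^ kkk i P)"
  unfolding key_def kk_of_def kLW_def kH_def kg_def kS_def by simp_all

lemma lvl: "i + 1 \<le> 4 ^ lvl i" "lvl i > 0 \<Longrightarrow> 4 ^ (lvl i - 1) < i + 1"
proof -
  have ex: "\<exists>a. i + 1 \<le> 4 ^ a" by (intro exI[of _ "i + 1"]) (induct i, auto)
  show "i + 1 \<le> 4 ^ lvl i" unfolding lvl_def by (rule LeastI_ex[OF ex])
  assume "lvl i > 0"
  hence "lvl i - 1 < lvl i" by simp
  thus "4 ^ (lvl i - 1) < i + 1" using not_less_Least[of "lvl i - 1" "\<lambda>a. i + 1 \<le> 4 ^ a"] unfolding lvl_def
    by (metis not_le)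
qed

locale pc = cpt P for P +
  assumes intne: "interior P \<noteq> {}" and h1: "hgt P \<le> 1"
begin

lemma pos: "hgt P > 0" "wid P > 0"
proof -
  obtain q where q: "q \<in> interior P" using intne by auto
  then obtain e where e: "e > 0" "ball q e \<subseteq> P" using int_ball by blast
  have "q + (e/2, 0) \<in> ball q e" "q - (e/2, 0) \<in> ball q e" "q + (0, e/2) \<in> ball q e" "q - (0, e/2) \<in> ball q e"
    using e(1) by (simp_all add: dist_norm)
  hence m: "q + (e/2, 0) \<in> P" "q - (e/2, 0) \<in> P" "q + (0, e/2) \<in> P" "q - (0, e/2) \<in> P"
    using e(2) by blast+
  have "fst q + e/2 \<le> xmax P" using bnds(4)[OF m(1)] by simp
  moreover have "xmin P \<le> fst q - e/2" using bnds(3)[OF m(2)] by simp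
  moreover have "snd q + e/2 \<le> ymax P" using bnds(2)[OF m(3)] by simp
  moreover have "ymin P \<le> snd q - e/2" using bnds(1)[OF m(4)] by simp
  ultimately have "fst q + e/2 \<le> xmax P" "xmin P \<le> fst q - e/2" "snd q + e/2 \<le> ymax P" "ymin P \<le> snd q - e/2"
    by auto
  thus "hgt P > 0" "wid P > 0" unfolding hgt_def wid_def using e by auto
qed

lemma LW: "wid P \<le> 2 powr real_of_int (ew P)" "2 powr real_of_int (ew P) < 2 * wid P"
proof -
  have w: "2 powr log 2 (wid P) = wid P" using pos by simp
  have "log 2 (wid P) \<le> real_of_int (ew P)" unfolding ew_def by linarith
  hence "2 powr log 2 (wid P) \<le> 2 powr real_of_int (ew P)" by (intro powr_mono) auto
  thus "wid P \<le> 2 powr real_of_int (ew P)" using w by simp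
  have "real_of_int (ew P) < log 2 (wid P) + 1" unfolding ew_def by linarith
  hence "2 powr real_of_int (ew P) < 2 powr (log 2 (wid P) + 1)" by (intro powr_less_mono) auto
  also have "... = 2 * wid P" using w by (simp add: powr_add)
  finally show "2 powr real_of_int (ew P) < 2 * wid P" .
qed

lemma kc: "hgt P \<le> 1 / 2 ^ kc P" "1 / 2 ^ (kc P + 1) < hgt P"
proof -
  define f where "f = - log 2 (hgt P)"
  have f0: "0 \<le> f" unfolding f_def using pos h1 by simp
  have k: "real (kc P) = of_int \<lfloor>f\<rfloor>" unfolding kc_def f_def[symmetric] using f0 by simp
  have hf: "2 powr f = 1 / hgt P" unfolding f_def using pos by (simp add: powr_minus divide_inverse)
  have "real (kc P) \<le> f" using k by linarith
  hence "2 powr real (kc P) \<le> 2 powr f" by (intro powr_mono) auto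
  hence "2 ^ kc P \<le> 1 / hgt P" using hf by (simp add: powr_realpow)
  thus "hgt P \<le> 1 / 2 ^ kc P" using pos by (simp add: field_simps)
  have "f < real (kc P) + 1" using k by linarith
  hence "2 powr f < 2 powr (real (kc P) + 1)" by (intro powr_less_mono) auto
  hence "1 / hgt P < 2 ^ (kc P + 1)" using hf by (simp add: powr_realpow powr_add)
  thus "1 / 2 ^ (kc P + 1) < hgt P" using pos by (simp add: field_simps)
qed

lemma slope_bnd: "\<bar>slope P\<bar> * hgt P \<le> wid P"
proof -
  have "xmin P \<le> fst (topp P)" "fst (topp P) \<le> xmax P" "xmin P \<le> fst (botp P)" "fst (botp P) \<le> xmax P"
    using bnds(3,4) topp botp by auto
  hence "\<bar>fst (topp P) - fst (botp P)\<bar> \<le> wid P" unfolding wid_def by auto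
  thus ?thesis unfolding slope_def using pos by (simp add: abs_divide)
qed

lemma hH: "hgt P \<le> kH (key i P)"
proof -
  have "(2::real) ^ kkk i P \<le> 2 ^ kc P" unfolding kkk_def by (intro power_increasing) auto
  hence "1 / 2 ^ kc P \<le> 1 / (2::real) ^ kkk i P" by (intro divide_left_mono) auto
  thus ?thesis using kc(1) unfolding key_simps by linarith
qed

lemma main_bounds:
  shows "\<bar>kS (key i P)\<bar> * kH (key i P) \<le> kA (key i P)"
    and "0 \<le> DD i P" and "DD i P \<le> kL (key i P) / 2"
    and "2 * lvl i \<le> kc P \<Longrightarrow> DD i P = wid P"
    and "kc P < 2 * lvl i \<Longrightarrow> DD i P \<le> ext (slope P) P + kg (key i P) / 2"
proof -
  define LWv where "LWv = 2 powr real_of_int (ew P)"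
  define g where "g = LWv / 2 ^ lvl i"
  define H where "H = 1 / (2::real) ^ kkk i P"
  have LWp: "LWv > 0" unfolding LWv_def by simp
  have gp: "g > 0" "g \<le> LWv" unfolding g_def using LWp by (auto simp: field_simps)
  have Hp: "H > 0" unfolding H_def by simp
  have hH': "hgt P \<le> H" using hH[of i] unfolding key_simps H_def .
  note lw = LW[folded LWv_def]
  have kS: "kS (key i P) = real_of_int (jj i P) * g / H" unfolding key_simps g_def H_def LWv_def by simp
  have kH': "kH (key i P) = H" unfolding key_simps H_def ..
  have kA': "kA (key i P) = 3 * LWv" unfolding kA_def key_simps LWv_def ..
  have kL': "kL (key i P) = 6 * LWv" unfolding kL_def key_simps LWv_def ..
  have kg': "kg (key i P) = g" unfolding key_simps g_def LWv_def ..
  have DDe: "DD i P = ext (kS (key i P)) P" unfolding DD_def ..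
  have A: "\<bar>kS (key i P)\<bar> * H \<le> 3 * LWv \<and> DD i P \<le> 3 * LWv \<and>
      (2 * lvl i \<le> kc P \<longrightarrow> DD i P = wid P) \<and> (kc P < 2 * lvl i \<longrightarrow> DD i P \<le> ext (slope P) P + g / 2)"
  proof (cases "2 * lvl i \<le> kc P")
    case True
    hence "kS (key i P) = 0" unfolding kS jj_def by simp
    thus ?thesis using True ext0 lw unfolding DDe by auto
  next
    case False
    have kk: "kkk i P = kc P" unfolding kkk_def using False by simp
    define z where "z = slope P * H / g"
    have jz: "jj i P = round z" unfolding jj_def z_def g_def H_def LWv_def using False by simp
    have rz: "\<bar>real_of_int (jj i P) - z\<bar> \<le> 1/2" unfolding jz by (rule of_int_round_abs_le)
    have H2: "H < 2 * hgt P" using kc(2) unfolding H_def kk by (simp add: field_simps)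
    have sH: "\<bar>slope P\<bar> * H \<le> 2 * wid P"
    proof -
      have "\<bar>slope P\<bar> * H \<le> \<bar>slope P\<bar> * (2 * hgt P)" using H2 by (intro mult_left_mono) auto
      thus ?thesis using slope_bnd by linarith
    qed
    have "\<bar>kS (key i P)\<bar> * H = \<bar>real_of_int (jj i P)\<bar> * g" unfolding kS using Hp gp by (simp add: abs_mult)
    also have "... \<le> (\<bar>z\<bar> + 1/2) * g"
      using rz gp abs_triangle_ineq2[of "real_of_int (jj i P)" z] by (intro mult_right_mono) auto
    also have "... = \<bar>slope P\<bar> * H + g / 2" unfolding z_def using gp Hp by (simp add: abs_mult abs_divide field_simps)
    also have "... \<le> 3 * LWv" using sH lw gp by linarith
    finally have c1: "\<bar>kS (key i P)\<bar> * H \<le> 3 * LWv" .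
    have ks: "kS (key i P) - slope P = (real_of_int (jj i P) - z) * g / H"
      unfolding kS z_def using gp Hp by (simp add: field_simps)
    have "\<bar>kS (key i P) - slope P\<bar> * hgt P \<le> \<bar>kS (key i P) - slope P\<bar> * H"
      using hH' by (intro mult_left_mono) auto
    also have "\<bar>kS (key i P) - slope P\<bar> * H = \<bar>real_of_int (jj i P) - z\<bar> * g"
      unfolding ks using gp Hp by (simp add: abs_mult abs_divide)
    also have "... \<le> (1/2) * g" using rz gp by (intro mult_right_mono) auto
    finally have d: "\<bar>kS (key i P) - slope P\<bar> * hgt P \<le> g / 2" by simp
    have e1: "DD i P \<le> ext (slope P) P + g / 2" unfolding DDe using ext_lip[of "kS (key i P)" "slope P"] d by linarith
    have "ext (slope P) P \<le> 2 * wid P" using ext_le[of "slope P"] slope_bnd by linarith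
    hence "DD i P \<le> 3 * LWv" using e1 lw gp by linarith
    thus ?thesis using c1 e1 False by simp
  qed
  show "\<bar>kS (key i P)\<bar> * kH (key i P) \<le> kA (key i P)" using A kH' kA' by simp
  show "0 \<le> DD i P" unfolding DDe by (rule ext_nonneg)
  show "DD i P \<le> kL (key i P) / 2" using A kL' by simp
  show "2 * lvl i \<le> kc P \<Longrightarrow> DD i P = wid P" using A by simp
  show "kc P < 2 * lvl i \<Longrightarrow> DD i P \<le> ext (slope P) P + kg (key i P) / 2" using A kg' by simp
qed

end

definition tr :: "nat \<Rightarrow> point set \<Rightarrow> real \<times> nat \<times> real \<Rightarrow> point" where
  "tr i P d = (fst d + kA (key i P) + snd (snd d) - pmin (kS (key i P)) P - kS (key i P) * ymin P,
               real (fst (snd d)) * kH (key i P) - ymin P)"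

definition run :: "point set list \<Rightarrow> st" where
  "run xs = foldl (\<lambda>\<sigma> (i, P). snd (stepk (key i P) (DD i P) \<sigma>)) st0 (zip [0..<length xs] xs)"

definition alg :: online_alg where
  "alg xs = tr (length xs - 1) (last xs)
     (fst (stepk (key (length xs - 1) (last xs)) (DD (length xs - 1) (last xs)) (run (butlast xs))))"

definition desc :: "point set list \<Rightarrow> nat \<Rightarrow> real \<times> nat \<times> real" where
  "desc I i = fst (stepk (key i (I ! i)) (DD i (I ! i)) (run (take i I)))"

lemma run_snoc: "run (xs @ [x]) = snd (stepk (key (length xs) x) (DD (length xs) x) (run xs))"
  unfolding run_def by simp

lemma alg_pl: "i < length I \<Longrightarrow> alg_placement alg I i = tr i (I ! i) (desc I i)"
proof -
  assume i: "i < length I"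
  have "take (Suc i) I = take i I @ [I ! i]" using i by (simp add: take_Suc_conv_app_nth)
  thus ?thesis unfolding alg_placement_def alg_def desc_def using i by simp
qed

lemma run_take_Suc: "i < length I \<Longrightarrow> run (take (Suc i) I) = snd (stepk (key i (I ! i)) (DD i (I ! i)) (run (take i I)))"
proof -
  assume i: "i < length I"
  have "take (Suc i) I = take i I @ [I ! i]" using i by (simp add: take_Suc_conv_app_nth)
  thus ?thesis using run_snoc[of "take i I" "I ! i"] i by simp
qed

lemma adm_pc: assumes "admissible_instance I" "i < length I" shows "pc (I ! i)"
proof -
  have cp: "cpt (I ! i)" and ii: "interior (I ! i) \<noteq> {}" using adm_piece[OF assms] by auto
  have "I ! i \<in> set I" using assms(2) by simp
  then obtain t where t: "translate t (I ! i) \<subseteq> strip" using assms(1) unfolding admissible_instance_def by blast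
  interpret c: cpt "translate t (I ! i)" using cpt_translate[OF cp] .
  obtain p where p: "p \<in> translate t (I ! i)" "snd p = ymin (translate t (I ! i))" using c.att(1) by blast
  obtain q where q: "q \<in> translate t (I ! i)" "snd q = ymax (translate t (I ! i))" using c.att(2) by blast
  have "0 \<le> snd p" "snd q \<le> 1" using t p q unfolding strip_def by auto
  hence "hgt (translate t (I ! i)) \<le> 1" unfolding hgt_def using p q by simp
  hence "hgt (I ! i) \<le> 1" using tr_shift(7)[OF cp] by simp
  thus ?thesis using cp ii unfolding pc_def pc_axioms_def by auto
qed

lemma inv_run:
  assumes "admissible_instance I" "m \<le> length I"
  shows "invr m (desc I) (\<lambda>i. key i (I ! i)) (\<lambda>i. DD i (I ! i)) (run (take m I))"
  using assms(2)
proof (induction m)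
  case 0 thus ?case using inv0 by (simp add: run_def)
next
  case (Suc m)
  hence m: "m < length I" by simp
  interpret pc "I ! m" using adm_pc[OF assms(1) m] .
  have st: "stepk (key m (I ! m)) (DD m (I ! m)) (run (take m I)) = (desc I m, run (take (Suc m) I))"
    unfolding desc_def run_take_Suc[OF m] by simp
  show ?case
    by (rule inv_step[OF Suc.IH[OF Suc_leD[OF Suc.prems]] st]) (use main_bounds in auto)
qed

lemma region:
  assumes "pc P" and q: "q \<in> translate (tr i P (X, r, u)) P"
  shows "real r * kH (key i P) \<le> snd q" "snd q \<le> real r * kH (key i P) + kH (key i P)"
    "X + kA (key i P) + u \<le> phi (kS (key i P)) q + kS (key i P) * (real r * kH (key i P))"
    "phi (kS (key i P)) q + kS (key i P) * (real r * kH (key i P)) \<le> X + kA (key i P) + u + DD i P"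
    "X + u \<le> fst q" "fst q \<le> X + 2 * kA (key i P) + u + DD i P"
proof -
  interpret pc P by (rule assms(1))
  define s where "s = kS (key i P)"
  define H where "H = kH (key i P)"
  define A where "A = kA (key i P)"
  obtain p where p: "p \<in> P" "q = p + tr i P (X, r, u)" using q unfolding translate_def by auto
  have sq: "snd q = snd p + real r * H - ymin P" unfolding p tr_def H_def by simp
  have ph: "phi s q + s * (real r * H) = phi s p - pmin s P + X + A + u"
    unfolding p tr_def s_def H_def A_def phi_def by (simp add: algebra_simps)
  have hb: "ymin P \<le> snd p" "snd p \<le> ymax P" using bnds(1,2) p by auto
  have hH': "hgt P \<le> H" unfolding H_def by (rule hH)
  show r1: "real r * kH (key i P) \<le> snd q" "snd q \<le> real r * kH (key i P) + kH (key i P)"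
    using sq hb hH' unfolding H_def hgt_def by auto
  have pb: "pmin s P \<le> phi s p" "phi s p \<le> pmax s P" using bnds(5,6) p by auto
  show r2: "X + kA (key i P) + u \<le> phi (kS (key i P)) q + kS (key i P) * (real r * kH (key i P))"
    "phi (kS (key i P)) q + kS (key i P) * (real r * kH (key i P)) \<le> X + kA (key i P) + u + DD i P"
    using ph pb unfolding s_def[symmetric] H_def[symmetric] A_def[symmetric] DD_def ext_def by auto
  have fq: "fst q = (phi s q + s * (real r * H)) + s * (snd q - real r * H)" unfolding phi_def by (simp add: algebra_simps)
  have "\<bar>s * (snd q - real r * H)\<bar> \<le> \<bar>s\<bar> * H"
    unfolding abs_mult using r1 unfolding H_def[symmetric] by (intro mult_left_mono) auto
  also have "... \<le> A" using main_bounds(1)[of i] unfolding s_def H_def A_def .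
  finally have "\<bar>s * (snd q - real r * H)\<bar> \<le> A" .
  thus "X + u \<le> fst q" "fst q \<le> X + 2 * kA (key i P) + u + DD i P"
    using fq r2 unfolding s_def[symmetric] H_def[symmetric] A_def[symmetric] by auto
qed


lemma kconsts: "kBW k = kL k + 2 * kA k" unfolding kBW_def kL_def kA_def by simp

lemma disj:
  assumes P: "pc P" and P': "pc P'"
    and sp: "sepd (X, r, u) (key i P) (DD i P) (X', r', u') (key j P') (DD j P')"
    and b1: "u + DD i P \<le> kL (key i P)" "0 \<le> u" and b2: "u' + DD j P' \<le> kL (key j P')" "0 \<le> u'"
  shows "interior (translate (tr i P (X, r, u)) P) \<inter> interior (translate (tr j P' (X', r', u')) P') = {}"
proof (rule ccontr)
  define Q1 where "Q1 = translate (tr i P (X, r, u)) P"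
  define Q2 where "Q2 = translate (tr j P' (X', r', u')) P'"
  assume "interior (translate (tr i P (X, r, u)) P) \<inter> interior (translate (tr j P' (X', r', u')) P') \<noteq> {}"
  then obtain z where z: "z \<in> interior Q1" "z \<in> interior Q2" unfolding Q1_def Q2_def by auto
  note R1 = region[OF P, of _ i X r u, folded Q1_def]
  note R2 = region[OF P', of _ j X' r' u', folded Q2_def]
  have fx: "phi 0 q = fst q" for q unfolding phi_def by simp
  have lr: False if lt: "X + kBW (key i P) \<le> X'"
    and Pa: "pc P" and Pb: "pc P'" and bb: "u + DD i P \<le> kL (key i P)" "0 \<le> u'"
    and za: "z \<in> interior (translate (tr i P (X, r, u)) P)" and zb: "z \<in> interior (translate (tr j P' (X', r', u')) P')"
    for X X' r r' u u' i j P P'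
  proof -
    have "translate (tr i P (X, r, u)) P \<subseteq> {q. phi 0 q \<le> X'}"
      using region(6)[OF Pa] bb lt kconsts[of "key i P"] by (force simp: fx)
    hence "phi 0 z < X'" using int_phi_hi za by blast
    moreover have "translate (tr j P' (X', r', u')) P' \<subseteq> {q. X' \<le> phi 0 q}"
      using region(5)[OF Pb] bb by (force simp: fx)
    hence "X' < phi 0 z" using int_phi_lo zb by blast
    ultimately show False by simp
  qed
  consider "X + kBW (key i P) \<le> X'" | "X' + kBW (key j P') \<le> X"
    | "key i P = key j P'" "X = X'" "r \<noteq> r'" | "key i P = key j P'" "X = X'" "r = r'" "u + DD i P \<le> u' \<or> u' + DD j P' \<le> u"
    using sp unfolding sepd_def fst_conv snd_conv by blast
  thus False
  proof cases
    case 1 thus False using lr[OF 1 P P' b1(1) b2(2)] z unfolding Q1_def Q2_def by blast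
  next
    case 2 thus False using lr[OF 2 P' P b2(1) b1(2)] z unfolding Q1_def Q2_def by blast
  next
    case 3
    have H: "kH (key i P) = kH (key j P')" using 3 by simp
    have rows: False if "r1 < r2" "z \<in> interior Qa" "z \<in> interior Qb"
      "Qa \<subseteq> {q. snd q \<le> real r1 * kH (key i P) + kH (key i P)}" "Qb \<subseteq> {q. real r2 * kH (key i P) \<le> snd q}"
      for r1 r2 Qa Qb
    proof -
      have "Suc r1 \<le> r2" using that(1) by simp
      hence "real (Suc r1) \<le> real r2" by (simp only: of_nat_le_iff)
      hence "(real r1 + 1) * kH (key i P) \<le> real r2 * kH (key i P)"
        using kH_pos[of "key i P"] by (intro mult_right_mono) auto
      hence "real r1 * kH (key i P) + kH (key i P) \<le> real r2 * kH (key i P)" by (simp add: algebra_simps)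
      hence "Qa \<subseteq> {q. snd q \<le> real r2 * kH (key i P)}" using that(4) by auto
      hence "snd z < real r2 * kH (key i P)" using int_snd_hi that(2) by blast
      moreover have "real r2 * kH (key i P) < snd z" using int_snd_lo that(3,5) by blast
      ultimately show False by simp
    qed
    have s1: "Q1 \<subseteq> {q. snd q \<le> real r * kH (key i P) + kH (key i P)}" "Q1 \<subseteq> {q. real r * kH (key i P) \<le> snd q}"
      using R1(1,2) by auto
    have s2: "Q2 \<subseteq> {q. snd q \<le> real r' * kH (key i P) + kH (key i P)}" "Q2 \<subseteq> {q. real r' * kH (key i P) \<le> snd q}"
      using R2(1,2) H by auto
    show False
    proof (cases "r < r'")
      case True show False by (rule rows[OF True z s1(1) s2(2)])
    next
      case False hence "r' < r" using 3 by simp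
      thus False using rows[OF _ z(2) z(1) s2(1) s1(2)] by blast
    qed
  next
    case 4
    define s where "s = kS (key i P)"
    define c where "c = s * (real r * kH (key i P))"
    have e: "kS (key j P') = s" "kH (key j P') = kH (key i P)" "kA (key j P') = kA (key i P)"
      using 4 unfolding s_def by simp_all
    have a1: "Q1 \<subseteq> {q. phi s q \<le> X + kA (key i P) + u + DD i P - c}" "Q1 \<subseteq> {q. X + kA (key i P) + u - c \<le> phi s q}"
    proof -
      show "Q1 \<subseteq> {q. phi s q \<le> X + kA (key i P) + u + DD i P - c}"
      proof
        fix q assume "q \<in> Q1" from R1(4)[OF this] show "q \<in> {q. phi s q \<le> X + kA (key i P) + u + DD i P - c}"
          unfolding s_def c_def by simp
      qed
      show "Q1 \<subseteq> {q. X + kA (key i P) + u - c \<le> phi s q}"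
      proof
        fix q assume "q \<in> Q1" from R1(3)[OF this] show "q \<in> {q. X + kA (key i P) + u - c \<le> phi s q}"
          unfolding s_def c_def by simp
      qed
    qed
    have a2: "Q2 \<subseteq> {q. phi s q \<le> X + kA (key i P) + u' + DD j P' - c}" "Q2 \<subseteq> {q. X + kA (key i P) + u' - c \<le> phi s q}"
    proof -
      show "Q2 \<subseteq> {q. phi s q \<le> X + kA (key i P) + u' + DD j P' - c}"
      proof
        fix q assume "q \<in> Q2" from R2(4)[OF this] show "q \<in> {q. phi s q \<le> X + kA (key i P) + u' + DD j P' - c}"
          unfolding c_def e(1,2,3)[symmetric] 4(2,3) by simp
      qed
      show "Q2 \<subseteq> {q. X + kA (key i P) + u' - c \<le> phi s q}"
      proof
        fix q assume "q \<in> Q2" from R2(3)[OF this] show "q \<in> {q. X + kA (key i P) + u' - c \<le> phi s q}"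
          unfolding c_def e(1,2,3)[symmetric] 4(2,3) by simp
      qed
    qed
    have "phi s z < X + kA (key i P) + u + DD i P - c" "X + kA (key i P) + u - c < phi s z"
      using int_phi_hi[OF a1(1) z(1)] int_phi_lo[OF a1(2) z(1)] by auto
    moreover have "phi s z < X + kA (key i P) + u' + DD j P' - c" "X + kA (key i P) + u' - c < phi s z"
      using int_phi_hi[OF a2(1) z(2)] int_phi_lo[OF a2(2) z(2)] by auto
    ultimately show False using 4(4) by linarith
  qed
qed

lemma alg_valid: "online_valid alg"
  unfolding online_valid_def
proof (intro allI impI)
  fix I assume adm: "admissible_instance I"
  define n where "n = length I"
  have iv: "invr n (desc I) (\<lambda>i. key i (I ! i)) (\<lambda>i. DD i (I ! i)) (run I)"
    using inv_run[OF adm, of n] unfolding n_def by simp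
  have A1: "\<forall>i<n. 0 \<le> fst (desc I i) \<and> fst (desc I i) + kBW (key i (I ! i)) \<le> cur (run I) \<and> 0 \<le> snd (snd (desc I i)) \<and>
           snd (snd (desc I i)) + DD i (I ! i) \<le> kL (key i (I ! i)) \<and> fst (snd (desc I i)) < 2 ^ kk_of (key i (I ! i))"
   and A2: "\<forall>i<n. \<forall>j<n. i \<noteq> j \<longrightarrow> sepd (desc I i) (key i (I ! i)) (DD i (I ! i)) (desc I j) (key j (I ! j)) (DD j (I ! j))"
    using iv unfolding invr_def by argo+
  show "valid_placement I (alg_placement alg I)"
    unfolding valid_placement_def n_def[symmetric]
  proof (intro conjI allI impI)
    fix i assume i: "i < n"
    obtain X r u where d: "desc I i = (X, r, u)" by (cases "desc I i") auto
    have P: "pc (I ! i)" using adm_pc[OF adm] i n_def by simp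
    have c: "0 \<le> X" "0 \<le> u" "r < 2 ^ kk_of (key i (I ! i))" using A1 i d by auto
    show "translate (alg_placement alg I i) (I ! i) \<subseteq> strip"
    proof
      fix q assume "q \<in> translate (alg_placement alg I i) (I ! i)"
      hence q: "q \<in> translate (tr i (I ! i) (X, r, u)) (I ! i)" using alg_pl i d n_def by simp
      note R = region[OF P q]
      have one: "real r * kH (key i (I ! i)) + kH (key i (I ! i)) \<le> 1"
      proof -
        have "real r + 1 \<le> 2 ^ kk_of (key i (I ! i))"
          using c(3) by (metis Suc_leI of_nat_Suc of_nat_le_iff of_nat_numeral of_nat_power add.commute)
        hence "(real r + 1) * kH (key i (I ! i)) \<le> 1" unfolding kH_def by (simp add: field_simps)
        thus ?thesis by (simp add: algebra_simps)
      qed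
      have zero: "0 \<le> real r * kH (key i (I ! i))" using kH_pos[of "key i (I ! i)"] by simp
      have "0 \<le> snd q" "snd q \<le> 1" "0 \<le> fst q" using one zero R(1,2,5) c by linarith+
      thus "q \<in> strip" unfolding strip_def by simp
    qed
  next
    fix i j assume ij: "i < n" "j < n" "i \<noteq> j"
    obtain X r u where di: "desc I i = (X, r, u)" by (cases "desc I i") auto
    obtain X' r' u' where dj: "desc I j = (X', r', u')" by (cases "desc I j") auto
    have Pi: "pc (I ! i)" "pc (I ! j)" using adm_pc[OF adm] ij n_def by auto
    have b: "u + DD i (I ! i) \<le> kL (key i (I ! i))" "0 \<le> u" "u' + DD j (I ! j) \<le> kL (key j (I ! j))" "0 \<le> u'"
      using A1 ij di dj by auto
    have sp: "sepd (X, r, u) (key i (I ! i)) (DD i (I ! i)) (X', r', u') (key j (I ! j)) (DD j (I ! j))"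
      using A2 ij di dj by metis
    show "interior (translate (alg_placement alg I i) (I ! i)) \<inter> interior (translate (alg_placement alg I j) (I ! j)) = {}"
      using disj[OF Pi sp b] alg_pl ij di dj n_def by simp
  qed
qed

lemma inv_facts:
  assumes "invr m d kap Dv \<sigma>"
  shows "\<forall>i<m. 0 \<le> fst (d i) \<and> fst (d i) + kBW (kap i) \<le> cur \<sigma> \<and> 0 \<le> snd (snd (d i)) \<and>
           snd (snd (d i)) + Dv i \<le> kL (kap i) \<and> fst (snd (d i)) < 2 ^ kk_of (kap i)"
    "dom (mp \<sigma>) = kap ` {..<m}" "bb1 \<sigma> = (\<Sum>\<kappa>\<in>dom (mp \<sigma>). kBW \<kappa>)"
    "bb2 \<sigma> = (\<Sum>i<m. 4 * kH (kap i) * Dv i)" "cur \<sigma> \<le> bb1 \<sigma> + bb2 \<sigma>"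
proof -
  have a: "\<forall>i<m. 0 \<le> fst (d i) \<and> fst (d i) + kBW (kap i) \<le> cur \<sigma> \<and> 0 \<le> snd (snd (d i)) \<and>
           snd (snd (d i)) + Dv i \<le> kL (kap i) \<and> fst (snd (d i)) < 2 ^ kk_of (kap i)"
    and b: "\<forall>\<kappa> X r u. mp \<sigma> \<kappa> = Some (X, r, u) \<longrightarrow> 0 \<le> X \<and> X + kBW \<kappa> \<le> cur \<sigma> \<and> r < 2 ^ kk_of \<kappa> \<and>
         0 \<le> u \<and> u \<le> kL \<kappa> \<and>
         (\<forall>i<m. fst (d i) + kBW (kap i) \<le> X \<or> X + kBW \<kappa> \<le> fst (d i) \<or>
              (kap i = \<kappa> \<and> fst (d i) = X \<and> (fst (snd (d i)) < r \<or>
                  (fst (snd (d i)) = r \<and> snd (snd (d i)) + Dv i \<le> u))))"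
    and c: "dom (mp \<sigma>) = kap ` {..<m}" "bb1 \<sigma> = (\<Sum>\<kappa>\<in>dom (mp \<sigma>). kBW \<kappa>)"
    "bb2 \<sigma> = (\<Sum>i<m. 4 * kH (kap i) * Dv i)" "psi \<sigma> = (\<Sum>\<kappa>\<in>dom (mp \<sigma>). pv \<sigma> \<kappa>)"
    "cur \<sigma> + psi \<sigma> \<le> bb1 \<sigma> + bb2 \<sigma>"
    using assms unfolding invr_def by argo+
  show "\<forall>i<m. 0 \<le> fst (d i) \<and> fst (d i) + kBW (kap i) \<le> cur \<sigma> \<and> 0 \<le> snd (snd (d i)) \<and>
           snd (snd (d i)) + Dv i \<le> kL (kap i) \<and> fst (snd (d i)) < 2 ^ kk_of (kap i)" by (rule a)
  show "dom (mp \<sigma>) = kap ` {..<m}" "bb1 \<sigma> = (\<Sum>\<kappa>\<in>dom (mp \<sigma>). kBW \<kappa>)"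
    "bb2 \<sigma> = (\<Sum>i<m. 4 * kH (kap i) * Dv i)" using c by auto
  have "pv \<sigma> \<kappa> \<ge> 0" for \<kappa>
  proof (cases "mp \<sigma> \<kappa>")
    case None thus ?thesis unfolding pv_def by simp
  next
    case (Some v)
    obtain X r u where v: "v = (X, r, u)" by (cases v) auto
    have "0 \<le> u" using b Some v by blast
    thus ?thesis unfolding pv_def using Some v pval_nonneg by simp
  qed
  hence "psi \<sigma> \<ge> 0" using c(4) by (simp add: sum_nonneg)
  thus "cur \<sigma> \<le> bb1 \<sigma> + bb2 \<sigma>" using c(5) by linarith
qed

lemma alg_cost_le:
  assumes adm: "admissible_instance I" and ne: "I \<noteq> []"
  shows "packing_cost I (alg_placement alg I) \<le> bb1 (run I) + bb2 (run I)"
proof -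
  define n where "n = length I"
  have iv: "invr n (desc I) (\<lambda>i. key i (I ! i)) (\<lambda>i. DD i (I ! i)) (run I)"
    using inv_run[OF adm, of n] unfolding n_def by simp
  note F = inv_facts[OF iv]
  have "packing_cost I (alg_placement alg I) \<le> cur (run I)"
  proof (rule cost_le[OF ne adm])
    fix i q assume i: "i < length I" and q: "q \<in> translate (alg_placement alg I i) (I ! i)"
    obtain X r u where d: "desc I i = (X, r, u)" by (cases "desc I i") auto
    have P: "pc (I ! i)" using adm_pc[OF adm i] .
    have q': "q \<in> translate (tr i (I ! i) (X, r, u)) (I ! i)" using q alg_pl[OF i] d by simp
    have "X + kBW (key i (I ! i)) \<le> cur (run I)" "u + DD i (I ! i) \<le> kL (key i (I ! i))"
      using F(1) i d unfolding n_def by auto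
    thus "fst q \<le> cur (run I)" using region(6)[OF P q'] kconsts[of "key i (I ! i)"] by linarith
  qed
  thus ?thesis using F(5) by linarith
qed

lemma OPT_ge:
  assumes adm: "admissible_instance I" and h: "\<And>t. valid_placement I t \<Longrightarrow> B \<le> packing_cost I t"
  shows "B \<le> OPT I"
  unfolding OPT_def
proof (rule cInf_greatest)
  show "{packing_cost I t |t. valid_placement I t} \<noteq> {}"
    using alg_valid adm unfolding online_valid_def by blast
qed (use h in auto)

lemma OPT_facts:
  assumes adm: "admissible_instance I" and ne: "I \<noteq> []"
  shows "0 \<le> OPT I" "\<And>i. i < length I \<Longrightarrow> wid (I ! i) \<le> OPT I"
    "\<And>k. (\<Sum>i\<in>{i. i < length I \<and> hgt (I ! i) > 1 / 2 ^ (k + 1)}. ext (slope (I ! i)) (I ! i))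
          \<le> 4 * (4 * 2 ^ k + 1) * OPT I"
proof -
  show "0 \<le> OPT I" using OPT_ge[OF adm cost_nonneg[OF _ adm ne]] .
  show "\<And>i. i < length I \<Longrightarrow> wid (I ! i) \<le> OPT I" using OPT_ge[OF adm wid_le_cost[OF _ adm]] .
  fix k
  define c :: real where "c = 4 * (4 * 2 ^ k + 1)"
  have c: "c > 0" unfolding c_def by (intro mult_pos_pos add_pos_pos) auto
  have "(\<Sum>i\<in>{i. i < length I \<and> hgt (I ! i) > 1 / 2 ^ (k + 1)}. ext (slope (I ! i)) (I ! i)) / c \<le> OPT I"
  proof (rule OPT_ge[OF adm])
    fix t assume "valid_placement I t"
    from class_lb[OF this adm ne, of k] c show "(\<Sum>i\<in>{i. i < length I \<and> hgt (I ! i) > 1 / 2 ^ (k + 1)}. ext (slope (I ! i)) (I ! i)) / c \<le> packing_cost I t"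
      unfolding c_def[symmetric] by (simp add: divide_le_eq mult.commute)
  qed
  thus "(\<Sum>i\<in>{i. i < length I \<and> hgt (I ! i) > 1 / 2 ^ (k + 1)}. ext (slope (I ! i)) (I ! i))
          \<le> 4 * (4 * 2 ^ k + 1) * OPT I" using c unfolding c_def[symmetric] by (simp add: divide_le_eq mult.commute)
qed

lemma lvl_mono: "i \<le> j \<Longrightarrow> lvl i \<le> lvl j"
  unfolding lvl_def[of i] using lvl(1)[of j] by (intro Least_le) simp

lemma sqrt_lvl: "sqrt (real i + 1) \<le> 2 ^ lvl i"
proof -
  have "real (i + 1) \<le> real (4 ^ lvl i)" using lvl(1)[of i] by (simp only: of_nat_le_iff)
  hence a: "real i + 1 \<le> 4 ^ lvl i" by simp
  have "(4::real) ^ lvl i = (2 * 2) ^ lvl i" by simp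
  also have "... = 2 ^ lvl i * 2 ^ lvl i" by (rule power_mult_distrib)
  finally have "real i + 1 \<le> 2 ^ lvl i * 2 ^ lvl i" using a by simp
  hence "sqrt (real i + 1) \<le> sqrt (2 ^ lvl i * 2 ^ lvl i)" by (rule real_sqrt_le_mono)
  thus ?thesis by simp
qed

lemma sum_isqrt: "(\<Sum>i<n. 1 / sqrt (real i + 1)) \<le> 2 * sqrt (real n)"
proof (induction n)
  case 0 thus ?case by simp
next
  case (Suc n)
  have key: "1 / sqrt (real n + 1) \<le> 2 * sqrt (real n + 1) - 2 * sqrt (real n)"
  proof -
    have a: "sqrt (real n) \<le> sqrt (real n + 1)" by simp
    have p: "sqrt (real n + 1) > 0" by simp
    have "(sqrt (real n + 1) - sqrt (real n)) * (sqrt (real n + 1) + sqrt (real n)) = 1"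
      by (simp add: algebra_simps)
    moreover have y: "sqrt (real n + 1) + sqrt (real n) > 0" using p by (simp add: add_pos_nonneg)
    ultimately have "sqrt (real n + 1) - sqrt (real n) = 1 / (sqrt (real n + 1) + sqrt (real n))"
      by (simp add: eq_divide_eq)
    moreover have "1 / (2 * sqrt (real n + 1)) \<le> 1 / (sqrt (real n + 1) + sqrt (real n))"
      using a p y by (intro divide_left_mono) (auto intro: mult_pos_pos)
    ultimately show ?thesis by simp
  qed
  have "(\<Sum>i<Suc n. 1 / sqrt (real i + 1)) = (\<Sum>i<n. 1 / sqrt (real i + 1)) + 1 / sqrt (real n + 1)" by simp
  moreover have "sqrt (real (Suc n)) = sqrt (real n + 1)" by simp
  ultimately show ?case using Suc key by linarith
qed

lemma geo_sum:
  fixes E :: "int set"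
  assumes "finite E" "E \<noteq> {}"
  shows "(\<Sum>e\<in>E. 2 powr real_of_int e) < 2 powr real_of_int (Max E + 1)"
  using assms
proof (induction "card E" arbitrary: E)
  case 0 thus ?case by simp
next
  case (Suc c)
  define m where "m = Max E"
  have mE: "m \<in> E" unfolding m_def using Suc.prems by simp
  define E' where "E' = E - {m}"
  have sum: "(\<Sum>e\<in>E. 2 powr real_of_int e) = 2 powr real_of_int m + (\<Sum>e\<in>E'. 2 powr real_of_int e)"
    unfolding E'_def using sum.remove[OF Suc.prems(1) mE] by simp
  have pm: "2 powr real_of_int (Max E + 1) = 2 * 2 powr real_of_int m"
    unfolding m_def by (simp add: powr_add)
  show ?case
  proof (cases "E' = {}")
    case True thus ?thesis using sum pm by simp
  next
    case False
    have c: "c = card E'" unfolding E'_def using Suc.hyps(2) mE Suc.prems(1) by simp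
    have fE: "finite E'" unfolding E'_def using Suc.prems by simp
    have ih: "(\<Sum>e\<in>E'. 2 powr real_of_int e) < 2 powr real_of_int (Max E' + 1)"
      using Suc.hyps(1)[OF c fE False] .
    have "Max E' < m"
    proof -
      have "Max E' \<in> E'" using fE False by simp
      hence "Max E' \<in> E" "Max E' \<noteq> m" unfolding E'_def by auto
      moreover have "Max E' \<le> m" using \<open>Max E' \<in> E\<close> Suc.prems unfolding m_def by simp
      ultimately show ?thesis by simp
    qed
    hence "real_of_int (Max E') + 1 \<le> real_of_int m" by simp
    hence mono: "2 powr (real_of_int (Max E') + 1) \<le> 2 powr real_of_int m" by (intro powr_mono) auto
    have ih': "(\<Sum>e\<in>E'. 2 powr real_of_int e) < 2 powr (real_of_int (Max E') + 1)" using ih by simp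
    have pm': "2 powr (real_of_int (Max E + 1)) = 2 * 2 powr real_of_int m" using pm .
    show ?thesis unfolding pm' using sum mono ih' by linarith
  qed
qed

context pc begin

lemma jj_bnd: "\<bar>jj i P\<bar> \<le> 2 ^ (lvl i + 1)" and kkk_bnd: "kkk i P \<le> 2 * lvl i"
proof -
  show "kkk i P \<le> 2 * lvl i" unfolding kkk_def by simp
  show "\<bar>jj i P\<bar> \<le> 2 ^ (lvl i + 1)"
  proof (cases "2 * lvl i \<le> kc P")
    case True thus ?thesis unfolding jj_def by simp
  next
    case False
    define LWv where "LWv = 2 powr real_of_int (ew P)"
    define g where "g = LWv / 2 ^ lvl i"
    define H where "H = 1 / (2::real) ^ kkk i P"
    define z where "z = slope P * H / g"
    have kk: "kkk i P = kc P" unfolding kkk_def using False by simp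
    have LWp: "LWv > 0" unfolding LWv_def by simp
    have gp: "g > 0" unfolding g_def using LWp by simp
    have Hp: "H > 0" unfolding H_def by simp
    have jz: "jj i P = round z" unfolding jj_def z_def g_def H_def LWv_def using False by simp
    have H2: "H < 2 * hgt P" using kc(2) unfolding H_def kk by (simp add: field_simps)
    have sH: "\<bar>slope P\<bar> * H \<le> 2 * wid P"
    proof -
      have "\<bar>slope P\<bar> * H \<le> \<bar>slope P\<bar> * (2 * hgt P)" using H2 by (intro mult_left_mono) auto
      thus ?thesis using slope_bnd by linarith
    qed
    have "\<bar>z\<bar> = \<bar>slope P\<bar> * H / g" unfolding z_def using Hp gp by (simp add: abs_mult abs_divide)
    also have "... \<le> 2 * wid P / g" using sH gp by (simp add: divide_right_mono)
    also have "... \<le> 2 * LWv / g" using LW(1) gp unfolding LWv_def by (simp add: divide_right_mono)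
    also have "... = 2 * 2 ^ lvl i" unfolding g_def using LWp by simp
    finally have zb: "\<bar>z\<bar> \<le> 2 ^ (lvl i + 1)" by simp
    have "\<bar>real_of_int (jj i P)\<bar> \<le> \<bar>z\<bar> + 1/2"
      using of_int_round_abs_le[of z] abs_triangle_ineq2[of "real_of_int (jj i P)" z] unfolding jz by linarith
    hence "real_of_int \<bar>jj i P\<bar> < real_of_int (2 ^ (lvl i + 1) + 1)" using zb by simp
    hence "\<bar>jj i P\<bar> < 2 ^ (lvl i + 1) + 1" by (simp only: of_int_less_iff)
    thus ?thesis by simp
  qed
qed

lemma term_bnd:
  "4 * kH (key i P) * DD i P \<le> (if kc P < 2 * lvl i then 4 * ext (slope P) P / 2 ^ kc P else 0) + 8 * wid P / sqrt (real i + 1)"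
proof -
  have sq: "sqrt (real i + 1) \<le> 2 ^ lvl i" by (rule sqrt_lvl)
  have sqp: "sqrt (real i + 1) \<ge> 1" by simp
  have w: "wid P > 0" using pos by simp
  show ?thesis
  proof (cases "2 * lvl i \<le> kc P")
    case True
    have kk: "kkk i P = 2 * lvl i" unfolding kkk_def using True by simp
    have "(2::real) ^ (2 * lvl i) = 2 ^ lvl i * 2 ^ lvl i" by (simp add: power_add[symmetric] mult_2)
    also have "... \<ge> sqrt (real i + 1) * 1" using sq sqp by (intro mult_mono) auto
    finally have p: "sqrt (real i + 1) \<le> 2 ^ (2 * lvl i)" by simp
    have "4 * kH (key i P) * DD i P = 4 * wid P / 2 ^ (2 * lvl i)"
      unfolding key_simps kk main_bounds(4)[OF True] by simp
    also have "... \<le> 4 * wid P / sqrt (real i + 1)" using p w sqp by (intro divide_left_mono) auto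
    also have "... \<le> 8 * wid P / sqrt (real i + 1)" using w sqp by (intro divide_right_mono) auto
    finally show ?thesis using True by simp
  next
    case False
    hence nf: "kc P < 2 * lvl i" by simp
    have kk: "kkk i P = kc P" unfolding kkk_def using False by simp
    have e: "DD i P \<le> ext (slope P) P + kg (key i P) / 2" using main_bounds(5)[OF nf] .
    have g: "kg (key i P) \<le> 2 * wid P / sqrt (real i + 1)"
    proof -
      have "kg (key i P) = 2 powr real_of_int (ew P) / 2 ^ lvl i" unfolding key_simps ..
      also have "... \<le> 2 * wid P / 2 ^ lvl i" using LW(2) by (intro divide_right_mono) auto
      also have "... \<le> 2 * wid P / sqrt (real i + 1)" using sq w sqp by (intro divide_left_mono) auto
      finally show ?thesis .
    qed
    have h: "kH (key i P) = 1 / 2 ^ kc P" unfolding key_simps kk ..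
    have h1: "kH (key i P) \<le> 1" unfolding h by simp
    have "4 * kH (key i P) * DD i P \<le> 4 * kH (key i P) * (ext (slope P) P + kg (key i P) / 2)"
      using e kH_pos[of "key i P"] by (intro mult_left_mono) auto
    also have "... = 4 * ext (slope P) P / 2 ^ kc P + 2 * kH (key i P) * kg (key i P)"
      unfolding h by (simp add: algebra_simps)
    also have "2 * kH (key i P) * kg (key i P) \<le> 2 * 1 * kg (key i P)"
      using h1 kH_pos[of "key i P"] kg_def kLW_pos[of "key i P"]
      by (intro mult_right_mono mult_left_mono) (auto simp: kg_def)
    finally have f: "4 * kH (key i P) * DD i P \<le> 4 * ext (slope P) P / 2 ^ kc P + 2 * kg (key i P)" by simp
    have v0: "0 \<le> wid P / sqrt (real i + 1)" using w by simp
    have "kg (key i P) \<le> 2 * (wid P / sqrt (real i + 1))" using g by simp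
    hence "2 * kg (key i P) \<le> 8 * (wid P / sqrt (real i + 1))" using v0 by linarith
    thus ?thesis using f nf by simp
  qed
qed

end

definition fr :: "nat \<Rightarrow> real" where
  "fr n = (let a = lvl (n - 1) in
     48 * (real a + 1) * (2 * real a + 1) * (2 ^ (a + 2) + 1) + 80 * (2 * real a + 1) + 16 * sqrt (real n))"

lemma bb2_bound:
  assumes adm: "admissible_instance I" and ne: "I \<noteq> []"
  shows "(\<Sum>i<length I. 4 * kH (key i (I ! i)) * DD i (I ! i))
     \<le> (80 * (2 * real (lvl (length I - 1)) + 1) + 16 * sqrt (real (length I))) * OPT I"
proof -
  define n where "n = length I"
  define a where "a = lvl (n - 1)"
  define Opt where "Opt = OPT I"
  note OF = OPT_facts[OF adm ne, folded Opt_def n_def]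
  define NF where "NF = {i. i < n \<and> kc (I ! i) < 2 * lvl i}"
  define e where "e i = ext (slope (I ! i)) (I ! i)" for i
  have pcs: "pc (I ! i)" if "i < n" for i using adm_pc[OF adm] that unfolding n_def by simp
  have e0: "0 \<le> e i" if "i < n" for i unfolding e_def using cpt.ext_nonneg[OF pc.axioms(1)[OF pcs[OF that]]] .
  have "(\<Sum>i<n. 4 * kH (key i (I ! i)) * DD i (I ! i))
      \<le> (\<Sum>i<n. (if kc (I ! i) < 2 * lvl i then 4 * e i / 2 ^ kc (I ! i) else 0) + 8 * wid (I ! i) / sqrt (real i + 1))"
    using pc.term_bnd[OF pcs] unfolding e_def by (intro sum_mono) auto
  also have "... = (\<Sum>i\<in>NF. 4 * e i / 2 ^ kc (I ! i)) + (\<Sum>i<n. 8 * wid (I ! i) / sqrt (real i + 1))"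
  proof -
    have NFe: "NF = {i\<in>{..<n}. kc (I ! i) < 2 * lvl i}" unfolding NF_def by auto
    have "(\<Sum>i<n. (if kc (I ! i) < 2 * lvl i then 4 * e i / 2 ^ kc (I ! i) else 0)) = (\<Sum>i\<in>NF. 4 * e i / 2 ^ kc (I ! i))"
      unfolding NFe by (rule sum.inter_filter[symmetric]) simp
    thus ?thesis unfolding sum.distrib by simp
  qed
  also have "(\<Sum>i<n. 8 * wid (I ! i) / sqrt (real i + 1)) \<le> (\<Sum>i<n. 8 * Opt * (1 / sqrt (real i + 1)))"
    using OF(2) unfolding n_def by (intro sum_mono) (auto simp: divide_right_mono)
  also have "... = 8 * Opt * (\<Sum>i<n. 1 / sqrt (real i + 1))" by (simp add: sum_distrib_left)
  also have "... \<le> 8 * Opt * (2 * sqrt (real n))" using OF(1) sum_isqrt by (intro mult_left_mono) auto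
  also have "(\<Sum>i\<in>NF. 4 * e i / 2 ^ kc (I ! i)) = (\<Sum>k\<in>{..2*a}. \<Sum>i\<in>{i\<in>NF. kc (I ! i) = k}. 4 * e i / 2 ^ kc (I ! i))"
  proof (rule sum.group[symmetric])
    show "finite NF" unfolding NF_def by simp
    show "finite {..2 * a}" by simp
    show "(\<lambda>i. kc (I ! i)) ` NF \<subseteq> {..2 * a}"
    proof
      fix k assume "k \<in> (\<lambda>i. kc (I ! i)) ` NF"
      then obtain i where i: "i \<in> NF" "k = kc (I ! i)" by auto
      have "lvl i \<le> a" unfolding a_def using i(1) unfolding NF_def by (intro lvl_mono) auto
      thus "k \<in> {..2 * a}" using i unfolding NF_def by auto
    qed
  qed
  also have "... \<le> (\<Sum>k\<in>{..2*a}. 80 * Opt)"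
  proof (rule sum_mono)
    fix k assume "k \<in> {..2*a}"
    have sub: "{i\<in>NF. kc (I ! i) = k} \<subseteq> {i. i < length I \<and> hgt (I ! i) > 1 / 2 ^ (k + 1)}"
      using pc.kc(2)[OF pcs] unfolding NF_def n_def by auto
    have "(\<Sum>i\<in>{i\<in>NF. kc (I ! i) = k}. e i) \<le> (\<Sum>i\<in>{i. i < length I \<and> hgt (I ! i) > 1 / 2 ^ (k + 1)}. e i)"
      using sub e0 unfolding n_def by (intro sum_mono2) auto
    also have "... \<le> 4 * (4 * 2 ^ k + 1) * Opt" using OF(3)[of k] unfolding e_def n_def .
    finally have s1: "(\<Sum>i\<in>{i\<in>NF. kc (I ! i) = k}. e i) \<le> 4 * (4 * 2 ^ k + 1) * Opt" .
    have "(\<Sum>i\<in>{i\<in>NF. kc (I ! i) = k}. 4 * e i / 2 ^ kc (I ! i)) = (4 / 2 ^ k) * (\<Sum>i\<in>{i\<in>NF. kc (I ! i) = k}. e i)"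
      by (simp add: sum_distrib_left)
    also have "... \<le> (4 / 2 ^ k) * (4 * (4 * 2 ^ k + 1) * Opt)" by (rule mult_left_mono[OF s1]) simp
    also have "... = (64 + 16 / 2 ^ k) * Opt" by (simp add: field_simps)
    also have "... \<le> 80 * Opt"
    proof -
      have "16 / (2::real) ^ k \<le> 16" by (simp add: field_simps)
      thus ?thesis using OF(1) by (intro mult_right_mono) auto
    qed
    finally show "(\<Sum>i\<in>{i\<in>NF. kc (I ! i) = k}. 4 * e i / 2 ^ kc (I ! i)) \<le> 80 * Opt" .
  qed
  also have "(\<Sum>k\<in>{..2*a}. 80 * Opt) = 80 * (2 * real a + 1) * Opt" by simp
  finally show ?thesis unfolding n_def[symmetric] a_def[symmetric] Opt_def[symmetric] by (simp add: algebra_simps)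
qed

lemma bb1_bound:
  assumes adm: "admissible_instance I" and ne: "I \<noteq> []"
  shows "(\<Sum>\<kappa>\<in>(\<lambda>i. key i (I ! i)) ` {..<length I}. kBW \<kappa>)
     \<le> 48 * (real (lvl (length I - 1)) + 1) * (2 * real (lvl (length I - 1)) + 1) * (2 ^ (lvl (length I - 1) + 2) + 1) * OPT I"
proof -
  define n where "n = length I"
  define a where "a = lvl (n - 1)"
  define Opt where "Opt = OPT I"
  note OF = OPT_facts[OF adm ne, folded Opt_def n_def]
  define M :: int where "M = 2 ^ (a + 1)"
  define E where "E = (\<lambda>i. ew (I ! i)) ` {..<n}"
  define Z where "Z = {..2*a} \<times> {-M..M}"
  define Box where "Box = {..a} \<times> (E \<times> Z)"
  have pcs: "pc (I ! i)" if "i < n" for i using adm_pc[OF adm] that unfolding n_def by simp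
  have finE: "finite E" "E \<noteq> {}" unfolding E_def n_def using ne by auto
  have finZ: "finite Z" unfolding Z_def by simp
  have sub: "(\<lambda>i. key i (I ! i)) ` {..<n} \<subseteq> Box"
  proof
    fix \<kappa> assume "\<kappa> \<in> (\<lambda>i. key i (I ! i)) ` {..<n}"
    then obtain i where i: "i < n" "\<kappa> = key i (I ! i)" by auto
    have la: "lvl i \<le> a" unfolding a_def using i by (intro lvl_mono) auto
    have "\<bar>jj i (I ! i)\<bar> \<le> 2 ^ (lvl i + 1)" using pc.jj_bnd[OF pcs[OF i(1)]] .
    also have "(2::int) ^ (lvl i + 1) \<le> M" unfolding M_def using la by (intro power_increasing) auto
    finally have "\<bar>jj i (I ! i)\<bar> \<le> M" .
    moreover have "kkk i (I ! i) \<le> 2 * a" using pc.kkk_bnd[OF pcs[OF i(1)], of i] la by simp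
    ultimately show "\<kappa> \<in> Box" unfolding i(2) key_def Box_def Z_def E_def using la i(1) by auto
  qed
  have "(\<Sum>\<kappa>\<in>(\<lambda>i. key i (I ! i)) ` {..<n}. kBW \<kappa>) \<le> (\<Sum>\<kappa>\<in>Box. kBW \<kappa>)"
    using sub finE finZ kLW_pos unfolding Box_def kBW_def by (intro sum_mono2) (auto intro: less_imp_le)
  also have "(\<Sum>\<kappa>\<in>Box. kBW \<kappa>) = (\<Sum>x\<in>{..a}. \<Sum>y\<in>E \<times> Z. kBW (x, y))"
    unfolding Box_def by (simp add: sum.cartesian_product)
  also have "... = (\<Sum>x\<in>{..a}. \<Sum>e\<in>E. \<Sum>z\<in>Z. 12 * 2 powr real_of_int e)"
  proof -
    have cp: "(\<Sum>y\<in>E \<times> Z. f (fst y)) = (\<Sum>e\<in>E. \<Sum>z\<in>Z. f e)" for f :: "int \<Rightarrow> real"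
      using sum.cartesian_product[of "\<lambda>e z. f e" Z E] by (simp add: prod.case_eq_if)
    show ?thesis unfolding kBW_def kLW_def using cp[of "\<lambda>e. 12 * 2 powr real_of_int e"] by simp
  qed
  also have "... = real (a + 1) * (real (card Z) * (12 * (\<Sum>e\<in>E. 2 powr real_of_int e)))"
    by (simp add: sum_distrib_left)
  also have "(\<Sum>e\<in>E. 2 powr real_of_int e) \<le> 4 * Opt"
  proof -
    have "Max E \<in> E" using finE by simp
    then obtain i where i: "i < n" "Max E = ew (I ! i)" unfolding E_def by auto
    have "2 powr real_of_int (Max E) < 2 * wid (I ! i)" using pc.LW(2)[OF pcs[OF i(1)]] i(2) by simp
    also have "... \<le> 2 * Opt" using OF(2) i(1) unfolding n_def by simp
    finally have m: "2 powr real_of_int (Max E) < 2 * Opt" .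
    have "(\<Sum>e\<in>E. 2 powr real_of_int e) < 2 powr real_of_int (Max E + 1)" using geo_sum[OF finE] .
    also have "... = 2 * 2 powr real_of_int (Max E)" by (simp add: powr_add)
    finally show ?thesis using m by simp
  qed
  hence "real (a + 1) * (real (card Z) * (12 * (\<Sum>e\<in>E. 2 powr real_of_int e))) \<le> real (a + 1) * (real (card Z) * (12 * (4 * Opt)))"
    by (intro mult_left_mono) auto
  also have "card Z = (2 * a + 1) * (2 ^ (a + 2) + 1)"
  proof -
    have "card {-M..M} = nat (2 * M + 1)" by simp
    also have "nat (2 * M + 1) = 2 ^ (a + 2) + 1" unfolding M_def by (simp add: nat_add_distrib nat_mult_distrib nat_power_eq)
    finally show ?thesis unfolding Z_def by (simp add: card_cartesian_product)
  qed
  finally show ?thesis unfolding n_def[symmetric] a_def[symmetric] Opt_def[symmetric] by (simp add: algebra_simps)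
qed

theorem main_bound:
  assumes adm: "admissible_instance I" and ne: "I \<noteq> []"
  shows "packing_cost I (alg_placement alg I) \<le> fr (length I) * OPT I"
proof -
  define n where "n = length I"
  have iv: "invr n (desc I) (\<lambda>i. key i (I ! i)) (\<lambda>i. DD i (I ! i)) (run I)"
    using inv_run[OF adm, of n] unfolding n_def by simp
  note F = inv_facts[OF iv]
  have "packing_cost I (alg_placement alg I) \<le> bb1 (run I) + bb2 (run I)" by (rule alg_cost_le[OF adm ne])
  also have "bb1 (run I) \<le> 48 * (real (lvl (n - 1)) + 1) * (2 * real (lvl (n - 1)) + 1) * (2 ^ (lvl (n - 1) + 2) + 1) * OPT I"
    using bb1_bound[OF adm ne] F(2,3) unfolding n_def by simp
  also have "bb2 (run I) \<le> (80 * (2 * real (lvl (n - 1)) + 1) + 16 * sqrt (real n)) * OPT I"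
    using bb2_bound[OF adm ne] F(4) unfolding n_def by simp
  finally show ?thesis unfolding fr_def n_def Let_def by (simp add: algebra_simps)
qed

lemma l3: "31/20 \<le> log 2 (3::real)"
proof -
  have "(2 powr (31/20::real)) ^ 20 = 2 powr 31" by (simp add: powr_realpow[symmetric] powr_powr)
  also have "... = 2 ^ 31" by (simp add: powr_realpow)
  also have "... \<le> (3::real) ^ 20" by simp
  finally have "(2 powr (31/20::real)) ^ 20 \<le> 3 ^ 20" .
  hence "2 powr (31/20::real) \<le> 3" by (subst (asm) power_mono_iff) auto
  thus ?thesis by (subst le_log_iff) auto
qed

definition gb :: "nat \<Rightarrow> real" where "gb n = 528 * (2 * log 2 (real n) + 3)^2 * sqrt (real n)"

lemma fr_nonneg: "0 \<le> fr n" unfolding fr_def Let_def by simp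

lemma fr_le: assumes n: "n \<ge> 1" shows "fr n \<le> gb n"
proof -
  define a where "a = lvl (n - 1)"
  define Lg where "Lg = log 2 (real n)"
  define X where "X = 2 * Lg + 3"
  define r where "r = sqrt (real n)"
  have Lg0: "0 \<le> Lg" unfolding Lg_def using n by simp
  have r1: "1 \<le> r" unfolding r_def using n by simp
  have X3: "3 \<le> X" unfolding X_def using Lg0 by simp
  have p2: "(2::real) ^ a \<le> 2 * r"
  proof (cases "a = 0")
    case True thus ?thesis using r1 by simp
  next
    case False
    have "4 ^ (a - 1) < n - 1 + 1" using lvl(2)[of "n - 1"] False unfolding a_def by simp
    hence "real (4 ^ (a - 1)) < real n" using n by simp
    hence "(2::real) ^ (a - 1) * 2 ^ (a - 1) < real n"
      by (simp add: power_mult_distrib[symmetric])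
    hence "sqrt ((2::real) ^ (a - 1) * 2 ^ (a - 1)) < sqrt (real n)" by (rule real_sqrt_less_mono)
    hence "(2::real) ^ (a - 1) < r" unfolding r_def by simp
    moreover have "(2::real) ^ a = 2 * 2 ^ (a - 1)" using False by (cases a) auto
    ultimately show ?thesis by simp
  qed
  have aL: "real a \<le> Lg / 2 + 1"
  proof -
    have "real a = log 2 (2 ^ a)" by (simp add: log_nat_power)
    also have "... \<le> log 2 (2 * r)" using p2 r1 by (subst log_le_cancel_iff) auto
    also have "... = 1 + log 2 r" using r1 by (simp add: log_mult)
    also have "log 2 r = Lg / 2" unfolding r_def Lg_def using n by (simp add: log_def ln_sqrt)
    finally show ?thesis by simp
  qed
  have b1: "real a + 1 \<le> X" "2 * real a + 1 \<le> X" using aL Lg0 unfolding X_def by linarith+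
  have b3: "(2::real) ^ (a + 2) + 1 \<le> 9 * r" using p2 r1 by simp
  have "48 * (real a + 1) * (2 * real a + 1) * (2 ^ (a + 2) + 1) \<le> 48 * X * X * (9 * r)"
    using b1 b3 by (intro mult_mono) auto
  moreover have "80 * (2 * real a + 1) \<le> 80 * X * X * r"
  proof -
    have "X * 1 \<le> X * X" using X3 by (intro mult_left_mono) auto
    moreover have "X * X * 1 \<le> X * X * r" using r1 X3 by (intro mult_left_mono) auto
    ultimately have "X \<le> X * X * r" by simp
    hence "2 * real a + 1 \<le> X * X * r" using b1 by linarith
    hence "80 * (2 * real a + 1) \<le> 80 * (X * X * r)" by simp
    thus ?thesis by (simp add: mult.assoc)
  qed
  moreover have "16 * r \<le> 16 * X * X * r"
  proof -
    have "1 * 1 \<le> X * X" using X3 by (intro mult_mono) auto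
    hence "1 \<le> X * X" by simp
    hence "1 * r \<le> X * X * r" using r1 by (intro mult_right_mono) auto
    thus ?thesis by simp
  qed
  ultimately have "fr n \<le> 48 * X * X * (9 * r) + 80 * X * X * r + 16 * X * X * r"
    unfolding fr_def Let_def a_def[symmetric] r_def[symmetric] by linarith
  also have "... = gb n" unfolding gb_def X_def Lg_def r_def by (simp add: power2_eq_square algebra_simps)
  finally show ?thesis .
qed

lemma fr_bigo: "fr \<in> O(\<lambda>n. real n powr (log 2 3 - 1) * log 2 (real n))"
proof -
  have 1: "fr \<in> O(gb)"
  proof (rule bigoI[of _ 1])
    show "\<forall>\<^sub>F n in at_top. norm (fr n) \<le> 1 * norm (gb n)"
      using eventually_ge_at_top[of "1::nat"]
    proof eventually_elim
      case (elim n)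
      have "0 \<le> fr n" by (rule fr_nonneg)
      thus ?case using fr_le[OF elim] by simp
    qed
  qed
  have 2: "gb \<in> O(\<lambda>n. real n powr (11/20))" unfolding gb_def by real_asymp
  have 3: "(\<lambda>n. real n powr (11/20)) \<in> O(\<lambda>n. real n powr (log 2 3 - 1) * log 2 (real n))"
  proof (rule bigoI[of _ 1])
    show "\<forall>\<^sub>F n in at_top. norm (real n powr (11/20)) \<le> 1 * norm (real n powr (log 2 3 - 1) * log 2 (real n))"
      using eventually_ge_at_top[of "2::nat"]
    proof eventually_elim
      case (elim n)
      have n1: "1 \<le> real n" using elim by simp
      have "real n powr (11/20) \<le> real n powr (log 2 3 - 1)"
        using l3 n1 by (intro powr_mono) auto
      also have "... \<le> real n powr (log 2 3 - 1) * log 2 (real n)"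
      proof -
        have "1 \<le> log 2 (real n)" using elim by simp
        thus ?thesis by (intro mult_le_cancel_left1[THEN iffD2]) auto
      qed
      finally have "real n powr (11/20) \<le> real n powr (log 2 3 - 1) * log 2 (real n)" .
      moreover have "0 \<le> log 2 (real n)" using elim by simp
      ultimately show ?case by simp
    qed
  qed
  show ?thesis using landau_o.big_trans[OF 1 landau_o.big_trans[OF 2 3]] .
qed

theorem theorem5:
  shows "\<exists>(A :: online_alg) (f :: nat \<Rightarrow> real).
           has_competitive_ratio A f \<and>
           f \<in> O(\<lambda>n. real n powr (log 2 3 - 1) * log 2 (real n))"
proof (intro exI conjI)
  show "has_competitive_ratio alg fr"
    unfolding has_competitive_ratio_def using alg_valid main_bound by blast
  show "fr \<in> O(\<lambda>n. real n powr (log 2 3 - 1) * log 2 (real n))" by (rule fr_bigo)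
qed

end
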